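(* (Ordered SDC Resolution Completeness.) Let $N$ be a set of MSL(SDC) clauses that is saturated up to redundancy with respect to SDC-Resolution and SDC-Factoring (with the atom ordering $\prec$ and selection function $\mathrm{sel}$ below). Then $N$ is unsatisfiable if and only if $\square\in\mathrm{ground}(N)$. Moreover, if $\square\notin\mathrm{ground}(N)$, then the partial model $I_N$ satisfies $N$.
   Context: Clauses: a clause is written $\Gamma\rightarrow\Delta$ where $\Gamma,\Delta$ are finite multisets of atoms (negative resp. positive literals); $\square$ is the empty clause. Terms: a variable and a constant are straight; $f(s_1,\dots,s_n)$ is straight if $s_1,\dots,s_n$ are pairwise distinct variables except for at most one argument $s_i$ that is straight. Depth of variables/constants is $0$, depth$(f(s_1,\dots,s_n))=1+\max_i$ depth$(s_i)$; shallow = depth at most 1; linear = no variable occurs twice; complex = not a variable. Straight dismatching constraints (SDCs): an atomic SDC is $t\neq s$ with $s,t$ variable-disjoint and $s$ straight; an SDC $\pi=\bigwedge_i t_i\neq s_i$ is a finite conjunction of these. $\pi\sigma=\bigwedge_i t_i\sigma\neq s_i$. A solution of $\pi$ is a grounding substitution $\delta$ such that no $t_i\delta$ is an instance of $s_i$; solvable = has a solution. $\mathrm{norm}(\pi)$ is the normal form under: $\pi\wedge f(\vec t)\neq y\to\bot$; $\pi\wedge f(\vec t)\neq f(y_1,\dots,y_n)\to\bot$ ($y_j$ variables); $\pi\wedge f(t_1,\dots,t_n)\neq f(s_1,\dots,s_n)\to\pi\wedge t_i\neq s_i$ if $s_i$ is complex; $\pi\wedge f(\vec t)\neq g(\vec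 s)\to\pi$ for $f\neq g$; $\pi\wedge x\neq s\wedge x\neq s\sigma\to\pi\wedge x\neq s$. Constrained clauses $(C;\pi)$: ground instances are $C\delta$ with $\delta$ a solution of $\pi$ grounding all variables of $C$ and of the left-hand sides of $\pi$; $\mathrm{ground}(N)$ is the union over $N$. A Herbrand interpretation $I$ is a set of ground atoms; $I\models\Gamma\rightarrow\Delta$ (ground) iff $\Delta\cap I\neq\emptyset$ or $\Gamma\not\subseteq I$; $I\models(C;\pi)$ iff $I$ satisfies all its ground instances; $N$ is satisfiable iff it has a Herbrand model. MSL(SDC) clause: $(C;\pi)$ with $\pi$ an SDC and $C=\Gamma\rightarrow\Delta$ such that (i) all argument terms in $\Delta$ are shallow, each atom of $\Delta$ is linear and distinct atoms of $\Delta$ are variable-disjoint, (ii) all predicates are monadic, (iii) no equations in $\Delta$, (iv) no equations in $\Gamma$, or $\Gamma=\{s\approx t\}$, $\Delta$ empty and $s,t$ non-unifiable. Ordering: $\prec$ is an atom ordering (irreflexive, well-founded, total on ground atoms), extended to literals ($A\mapsto\{A\}$, $\neg A\mapsto\{A,A\}$, multiset extension) and to ground clauses (multiset extension); for ground atoms $Q(s)$, $P(t)$ with $s$ a proper subterm of $t$, $\neg Q(s)$ is not greater than $P(t)$. For a set $M$ of ground clauses, $M^{\prec C}=\{D\in M\mid D\prec C\}$. A literal $A$ is maximal [strictly maximal] in $(C\vee A;\pi)$ if some solution $\delta$ of $\pi$ gives $B\delta\preceq A\delta$ [$B\delta\prec A\delta$] for all literals $B$ of $C$. Selection: for $(S_1(t_1),\dots,S_n(t_n)\rightarrow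 P_1(s_1),\dots,P_m(s_m);\pi)$, $\mathrm{sel}(C)$ consists of those $S_i(t_i)$ with (1) $t_i$ not a variable, or (2) all $t_1,\dots,t_n$ variables and $t_i\notin\mathrm{vars}(s_1,\dots,s_m)$, or (3) $\{t_1,\dots,t_n\}\subseteq\mathrm{vars}(s_1,\dots,s_m)$ and $s_j=t_i$ for some $j$. SDC-Resolution: from variable-disjoint $(\Gamma_1\rightarrow\Delta_1,A;\pi_1)$, $(\Gamma_2,B\rightarrow\Delta_2;\pi_2)$ infer $((\Gamma_1,\Gamma_2\rightarrow\Delta_1,\Delta_2)\sigma;\mathrm{norm}((\pi_1\wedge\pi_2)\sigma))$ if $\sigma=\mathrm{mgu}(A,B)$, $\mathrm{norm}((\pi_1\wedge\pi_2)\sigma)$ is solvable, $A\sigma$ is strictly maximal in $(\Gamma_1\rightarrow\Delta_1,A;\pi_1)\sigma$ and $\mathrm{sel}(\Gamma_1\rightarrow\Delta_1,A)=\emptyset$, and either $B\in\mathrm{sel}(\Gamma_2,B\rightarrow\Delta_2)$ or ($\mathrm{sel}(\Gamma_2,B\rightarrow\Delta_2)=\emptyset$ and $\neg B\sigma$ is maximal in $(\Gamma_2,B\rightarrow\Delta_2;\pi_2)\sigma$). SDC-Factoring: from $(\Gamma\rightarrow\Delta,A,B;\pi)$ infer $((\Gamma\rightarrow\Delta,A)\sigma;\mathrm{norm}(\pi\sigma))$ if $\sigma=\mathrm{mgu}(A,B)$, $\mathrm{sel}(\Gamma\rightarrow\Delta,A,B)=\emptyset$, $A\sigma$ is maximal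 in $(\Gamma\rightarrow\Delta,A,B;\pi)\sigma$, and $\mathrm{norm}(\pi\sigma)$ is solvable. Redundancy and saturation: $(C;\pi)$ is redundant in $N$ if for every $D\in\mathrm{ground}((C;\pi))$ there are $D_1,\dots,D_n\in\mathrm{ground}(N)^{\prec D}$ with $D_1,\dots,D_n\models D$. $N$ is saturated up to redundancy if for every SDC-Resolution or SDC-Factoring inference from clauses of $N$ the conclusion $(R;\pi)$ is redundant in $N$ or $\mathrm{ground}((R;\pi))\subseteq\mathrm{ground}(N)$. Partial model: for $C\in\mathrm{ground}(N)$ let $I_C=\bigcup\{\delta_D\mid D\in\mathrm{ground}(N),D\prec C\}$, where $\delta_D=\{A\}$ if $D=\Gamma\rightarrow\Delta,A$ with $A$ strictly maximal in $D$, $\mathrm{sel}(D)=\emptyset$ and $I_D\not\models D$, and $\delta_D=\emptyset$ otherwise (for a ground instance $D=C'\delta$ of $(C';\pi')\in N$, $\mathrm{sel}(D)$ means $\mathrm{sel}(C')\delta$). $I_N=\bigcup_{C\in\mathrm{ground}(N)}\delta_C$. *)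

theory Defs
  imports Main "HOL-Library.Multiset"
begin

datatype 'f trm = Var nat | Fun 'f "'f trm list"

fun vars_trm :: "'f trm \<Rightarrow> nat set" where
  "vars_trm (Var x) = {x}"
| "vars_trm (Fun f ts) = (\<Union>t\<in>set ts. vars_trm t)"

fun vars_list :: "'f trm \<Rightarrow> nat list" where
  "vars_list (Var x) = [x]"
| "vars_list (Fun f ts) = concat (map vars_list ts)"

definition linear_trm :: "'f trm \<Rightarrow> bool" where
  "linear_trm t \<longleftrightarrow> distinct (vars_list t)"

definition ground_trm :: "'f trm \<Rightarrow> bool" where
  "ground_trm t \<longleftrightarrow> vars_trm t = {}"

fun wf_trm :: "('f \<Rightarrow> nat) \<Rightarrow> 'f trm \<Rightarrow> bool" where
  "wf_trm ar (Var x) = True"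
| "wf_trm ar (Fun f ts) = (length ts = ar f \<and> (\<forall>t\<in>set ts. wf_trm ar t))"

fun depth :: "'f trm \<Rightarrow> nat" where
  "depth (Var x) = 0"
| "depth (Fun f ts) = (if ts = [] then 0 else 1 + Max (set (map depth ts)))"

definition shallow :: "'f trm \<Rightarrow> bool" where
  "shallow t \<longleftrightarrow> depth t \<le> 1"

definition is_var :: "'f trm \<Rightarrow> bool" where
  "is_var t \<longleftrightarrow> (\<exists>x. t = Var x)"

fun straight :: "'f trm \<Rightarrow> bool" where
  "straight (Var x) = True"
| "straight (Fun f ss) =
     (linear_trm (Fun f ss) \<and>
      (\<exists>i. \<forall>j<length ss. j \<noteq> i \<longrightarrow> is_var (ss ! j)) \<and>
      (\<forall>s\<in>set ss. straight s))"

fun psubterms :: "'f trm \<Rightarrow> 'f trm set" where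
  "psubterms (Var x) = {}"
| "psubterms (Fun f ts) = (\<Union>t\<in>set ts. insert t (psubterms t))"

fun subst :: "(nat \<Rightarrow> 'f trm) \<Rightarrow> 'f trm \<Rightarrow> 'f trm" where
  "subst \<sigma> (Var x) = \<sigma> x"
| "subst \<sigma> (Fun f ts) = Fun f (map (subst \<sigma>) ts)"

definition instance_of :: "'f trm \<Rightarrow> 'f trm \<Rightarrow> bool" where
  "instance_of t s \<longleftrightarrow> (\<exists>\<tau>. subst \<tau> s = t)"

datatype ('f, 'p) atom = Pred 'p "'f trm" | Eq "'f trm" "'f trm"

fun subst_atom :: "(nat \<Rightarrow> 'f trm) \<Rightarrow> ('f, 'p) atom \<Rightarrow> ('f, 'p) atom" where
  "subst_atom \<sigma> (Pred P t) = Pred P (subst \<sigma> t)"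
| "subst_atom \<sigma> (Eq s t) = Eq (subst \<sigma> s) (subst \<sigma> t)"

fun vars_atom :: "('f, 'p) atom \<Rightarrow> nat set" where
  "vars_atom (Pred P t) = vars_trm t"
| "vars_atom (Eq s t) = vars_trm s \<union> vars_trm t"

fun wf_atom :: "('f \<Rightarrow> nat) \<Rightarrow> ('f, 'p) atom \<Rightarrow> bool" where
  "wf_atom ar (Pred P t) = wf_trm ar t"
| "wf_atom ar (Eq s t) = (wf_trm ar s \<and> wf_trm ar t)"

definition ground_atom :: "('f, 'p) atom \<Rightarrow> bool" where
  "ground_atom A \<longleftrightarrow> vars_atom A = {}"

datatype ('f, 'p) lit = Pos "('f, 'p) atom" | Neg "('f, 'p) atom"

fun subst_lit :: "(nat \<Rightarrow> 'f trm) \<Rightarrow> ('f, 'p) lit \<Rightarrow> ('f, 'p) lit" where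
  "subst_lit \<sigma> (Pos A) = Pos (subst_atom \<sigma> A)"
| "subst_lit \<sigma> (Neg A) = Neg (subst_atom \<sigma> A)"

text \<open>A clause \<open>\<Gamma> \<rightarrow> \<Delta>\<close> is the pair \<open>(\<Gamma>, \<Delta>)\<close> of multisets of atoms.\<close>
type_synonym ('f, 'p) clause = "('f, 'p) atom multiset \<times> ('f, 'p) atom multiset"

definition lits :: "('f, 'p) clause \<Rightarrow> ('f, 'p) lit multiset" where
  "lits C = image_mset Neg (fst C) + image_mset Pos (snd C)"

definition subst_cl :: "(nat \<Rightarrow> 'f trm) \<Rightarrow> ('f, 'p) clause \<Rightarrow> ('f, 'p) clause" where
  "subst_cl \<sigma> C = (image_mset (subst_atom \<sigma>) (fst C), image_mset (subst_atom \<sigma>) (snd C))"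

definition vars_cl :: "('f, 'p) clause \<Rightarrow> nat set" where
  "vars_cl C = (\<Union>A\<in>set_mset (fst C + snd C). vars_atom A)"

definition empty_cl :: "('f, 'p) clause" where
  "empty_cl = ({#}, {#})"

section \<open>Straight dismatching constraints\<close>

text \<open>An SDC is a multiset of atomic constraints; the pair \<open>(t, s)\<close> stands for \<open>t \<noteq> s\<close>.\<close>
type_synonym 'f sdc = "('f trm \<times> 'f trm) multiset"

definition subst_sdc :: "(nat \<Rightarrow> 'f trm) \<Rightarrow> 'f sdc \<Rightarrow> 'f sdc" where
  "subst_sdc \<sigma> \<pi> = image_mset (\<lambda>(t, s). (subst \<sigma> t, s)) \<pi>"

definition lhs_vars :: "'f sdc \<Rightarrow> nat set" where
  "lhs_vars \<pi> = (\<Union>c\<in>set_mset \<pi>. vars_trm (fst c))"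

definition is_sdc :: "'f sdc \<Rightarrow> bool" where
  "is_sdc \<pi> \<longleftrightarrow> (\<forall>(t, s)\<in>set_mset \<pi>. vars_trm t \<inter> vars_trm s = {} \<and> straight s)"

definition grounding :: "('f \<Rightarrow> nat) \<Rightarrow> (nat \<Rightarrow> 'f trm) \<Rightarrow> bool" where
  "grounding ar \<delta> \<longleftrightarrow> (\<forall>x. ground_trm (\<delta> x) \<and> wf_trm ar (\<delta> x))"

definition solution :: "('f \<Rightarrow> nat) \<Rightarrow> (nat \<Rightarrow> 'f trm) \<Rightarrow> 'f sdc \<Rightarrow> bool" where
  "solution ar \<delta> \<pi> \<longleftrightarrow> grounding ar \<delta> \<and> (\<forall>(t, s)\<in>set_mset \<pi>. \<not> instance_of (subst \<delta> t) s)"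

definition solvable :: "('f \<Rightarrow> nat) \<Rightarrow> 'f sdc \<Rightarrow> bool" where
  "solvable ar \<pi> \<longleftrightarrow> (\<exists>\<delta>. solution ar \<delta> \<pi>)"

text \<open>Normalisation; \<open>None\<close> represents \<open>\<bottom>\<close>.\<close>
inductive norm_step :: "'f sdc option \<Rightarrow> 'f sdc option \<Rightarrow> bool" where
  r1: "norm_step (Some (\<pi> + {#(Fun f ts, Var y)#})) None"
| r2: "length ys = length ts \<Longrightarrow> (\<forall>y\<in>set ys. is_var y) \<Longrightarrow>
       norm_step (Some (\<pi> + {#(Fun f ts, Fun f ys)#})) None"
| r3: "length ss = length ts \<Longrightarrow> i < length ss \<Longrightarrow> \<not> is_var (ss ! i) \<Longrightarrow>
       norm_step (Some (\<pi> + {#(Fun f ts, Fun f ss)#})) (Some (\<pi> + {#(ts ! i, ss ! i)#}))"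
| r4: "f \<noteq> g \<Longrightarrow> norm_step (Some (\<pi> + {#(Fun f ts, Fun g ss)#})) (Some \<pi>)"
| r5: "norm_step (Some (\<pi> + {#(Var x, s), (Var x, subst \<sigma> s)#})) (Some (\<pi> + {#(Var x, s)#}))"

definition norm :: "'f sdc \<Rightarrow> 'f sdc option" where
  "norm \<pi> = (SOME r. norm_step\<^sup>*\<^sup>* (Some \<pi>) r \<and> (\<forall>r'. \<not> norm_step r r'))"

definition solvable_opt :: "('f \<Rightarrow> nat) \<Rightarrow> 'f sdc option \<Rightarrow> bool" where
  "solvable_opt ar r \<longleftrightarrow> (case r of None \<Rightarrow> False | Some \<pi> \<Rightarrow> solvable ar \<pi>)"

type_synonym ('f, 'p) cclause = "('f, 'p) clause \<times> 'f sdc"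

definition ground_inst :: "('f \<Rightarrow> nat) \<Rightarrow> ('f, 'p) cclause set \<Rightarrow> ('f, 'p) clause set" where
  "ground_inst ar N = {subst_cl \<delta> C | C \<pi> \<delta>. (C, \<pi>) \<in> N \<and> solution ar \<delta> \<pi>}"

definition true_cl :: "('f, 'p) atom set \<Rightarrow> ('f, 'p) clause \<Rightarrow> bool" where
  "true_cl I C \<longleftrightarrow> set_mset (snd C) \<inter> I \<noteq> {} \<or> \<not> set_mset (fst C) \<subseteq> I"

definition models :: "('f \<Rightarrow> nat) \<Rightarrow> ('f, 'p) atom set \<Rightarrow> ('f, 'p) cclause set \<Rightarrow> bool" where
  "models ar I N \<longleftrightarrow> (\<forall>D\<in>ground_inst ar N. true_cl I D)"

definition satisfiable :: "('f \<Rightarrow> nat) \<Rightarrow> ('f, 'p) cclause set \<Rightarrow> bool" where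
  "satisfiable ar N \<longleftrightarrow>
     (\<exists>I. (\<forall>A\<in>I. ground_atom A \<and> wf_atom ar A) \<and> models ar I N)"

definition entails :: "('f, 'p) clause set \<Rightarrow> ('f, 'p) clause \<Rightarrow> bool" where
  "entails M D \<longleftrightarrow> (\<forall>I. (\<forall>D'\<in>M. true_cl I D') \<longrightarrow> true_cl I D)"

definition wf_ccl :: "('f \<Rightarrow> nat) \<Rightarrow> ('f, 'p) cclause \<Rightarrow> bool" where
  "wf_ccl ar Cl \<longleftrightarrow>
     (\<forall>A\<in>set_mset (fst (fst Cl) + snd (fst Cl)). wf_atom ar A) \<and>
     (\<forall>(t, s)\<in>set_mset (snd Cl). wf_trm ar t \<and> wf_trm ar s)"

definition msl_sdc :: "('f, 'p) cclause \<Rightarrow> bool" where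
  "msl_sdc Cl \<longleftrightarrow>
     (let \<Gamma> = fst (fst Cl); \<Delta> = snd (fst Cl); \<pi> = snd Cl in
      is_sdc \<pi> \<and>
      \<comment> \<open>(i) shallow, linear, pairwise variable-disjoint head atoms\<close>
      (\<forall>A\<in>set_mset \<Delta>. \<forall>P t. A = Pred P t \<longrightarrow> shallow t \<and> linear_trm t) \<and>
      (\<forall>A B \<Delta>0. \<Delta> = \<Delta>0 + {#A, B#} \<longrightarrow> vars_atom A \<inter> vars_atom B = {}) \<and>
      \<comment> \<open>(ii) monadic predicates: built into the datatype \<open>atom\<close>\<close>
      \<comment> \<open>(iii) no equations in \<Delta>\<close>
      (\<forall>A\<in>set_mset \<Delta>. \<forall>s t. A \<noteq> Eq s t) \<and>
      \<comment> \<open>(iv)\<close>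
      ((\<forall>A\<in>set_mset \<Gamma>. \<forall>s t. A \<noteq> Eq s t) \<or>
       (\<exists>s t. \<Gamma> = {#Eq s t#} \<and> \<Delta> = {#} \<and> \<not> (\<exists>\<sigma>. subst \<sigma> s = subst \<sigma> t))))"

definition lit_ms :: "('f, 'p) lit \<Rightarrow> ('f, 'p) atom multiset" where
  "lit_ms L = (case L of Pos A \<Rightarrow> {#A#} | Neg A \<Rightarrow> {#A, A#})"

definition lit_less :: "(('f, 'p) atom \<Rightarrow> ('f, 'p) atom \<Rightarrow> bool) \<Rightarrow> ('f, 'p) lit \<Rightarrow> ('f, 'p) lit \<Rightarrow> bool" where
  "lit_less lt L L' \<longleftrightarrow> (lit_ms L, lit_ms L') \<in> mult {(x, y). lt x y}"

definition lit_le :: "(('f, 'p) atom \<Rightarrow> ('f, 'p) atom \<Rightarrow> bool) \<Rightarrow> ('f, 'p) lit \<Rightarrow> ('f, 'p) lit \<Rightarrow> bool" where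
  "lit_le lt L L' \<longleftrightarrow> lit_less lt L L' \<or> L = L'"

definition cl_less :: "(('f, 'p) atom \<Rightarrow> ('f, 'p) atom \<Rightarrow> bool) \<Rightarrow> ('f, 'p) clause \<Rightarrow> ('f, 'p) clause \<Rightarrow> bool" where
  "cl_less lt C D \<longleftrightarrow> (lits C, lits D) \<in> mult {(L, L'). lit_less lt L L'}"

definition atom_ordering :: "('f \<Rightarrow> nat) \<Rightarrow> (('f, 'p) atom \<Rightarrow> ('f, 'p) atom \<Rightarrow> bool) \<Rightarrow> bool" where
  "atom_ordering ar lt \<longleftrightarrow>
     (\<forall>A. \<not> lt A A) \<and> transp lt \<and> wf {(x, y). lt x y} \<and>
     (\<forall>A B. ground_atom A \<and> wf_atom ar A \<and> ground_atom B \<and> wf_atom ar B \<and> A \<noteq> B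
            \<longrightarrow> lt A B \<or> lt B A) \<and>
     (\<forall>P Q s t. ground_atom (Pred Q s) \<and> wf_atom ar (Pred Q s) \<and>
                ground_atom (Pred P t) \<and> wf_atom ar (Pred P t) \<and> s \<in> psubterms t
                \<longrightarrow> \<not> lit_less lt (Pos (Pred P t)) (Neg (Pred Q s)))"

definition maximal :: "('f \<Rightarrow> nat) \<Rightarrow> (('f, 'p) atom \<Rightarrow> ('f, 'p) atom \<Rightarrow> bool) \<Rightarrow>
    ('f, 'p) lit \<Rightarrow> ('f, 'p) cclause \<Rightarrow> bool" where
  "maximal ar lt L Cl \<longleftrightarrow> L \<in># lits (fst Cl) \<and>
     (\<exists>\<delta>. solution ar \<delta> (snd Cl) \<and>
        (\<forall>B\<in>set_mset (lits (fst Cl) - {#L#}). lit_le lt (subst_lit \<delta> B) (subst_lit \<delta> L)))"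

definition strictly_maximal :: "('f \<Rightarrow> nat) \<Rightarrow> (('f, 'p) atom \<Rightarrow> ('f, 'p) atom \<Rightarrow> bool) \<Rightarrow>
    ('f, 'p) lit \<Rightarrow> ('f, 'p) cclause \<Rightarrow> bool" where
  "strictly_maximal ar lt L Cl \<longleftrightarrow> L \<in># lits (fst Cl) \<and>
     (\<exists>\<delta>. solution ar \<delta> (snd Cl) \<and>
        (\<forall>B\<in>set_mset (lits (fst Cl) - {#L#}). lit_less lt (subst_lit \<delta> B) (subst_lit \<delta> L)))"

definition gstrictly_maximal :: "(('f, 'p) atom \<Rightarrow> ('f, 'p) atom \<Rightarrow> bool) \<Rightarrow>
    ('f, 'p) lit \<Rightarrow> ('f, 'p) clause \<Rightarrow> bool" where
  "gstrictly_maximal lt L C \<longleftrightarrow> L \<in># lits C \<and>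
     (\<forall>B\<in>set_mset (lits C - {#L#}). lit_less lt B L)"

definition sel :: "('f, 'p) clause \<Rightarrow> ('f, 'p) atom multiset" where
  "sel C = (let \<Gamma> = fst C; \<Delta> = snd C;
                 vD = (\<Union>A\<in>set_mset \<Delta>. vars_atom A);
                 args = {t. \<exists>S. Pred S t \<in># \<Gamma>} in
     filter_mset (\<lambda>A. case A of
        Pred S t \<Rightarrow>
          \<not> is_var t
        \<or> ((\<forall>t'\<in>args. is_var t') \<and> (\<forall>x. t = Var x \<longrightarrow> x \<notin> vD))
        \<or> (args \<subseteq> Var ` vD \<and> (\<exists>P. Pred P t \<in># \<Delta>))
      | Eq s t \<Rightarrow> False) \<Gamma>)"

section \<open>Inferences\<close>

definition is_mgu :: "(nat \<Rightarrow> 'f trm) \<Rightarrow> ('f, 'p) atom \<Rightarrow> ('f, 'p) atom \<Rightarrow> bool" where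
  "is_mgu \<sigma> A B \<longleftrightarrow> subst_atom \<sigma> A = subst_atom \<sigma> B \<and>
     (\<forall>\<tau>. subst_atom \<tau> A = subst_atom \<tau> B \<longrightarrow> (\<exists>\<gamma>. \<forall>x. \<tau> x = subst \<gamma> (\<sigma> x)))"

definition subst_ccl :: "(nat \<Rightarrow> 'f trm) \<Rightarrow> ('f, 'p) cclause \<Rightarrow> ('f, 'p) cclause" where
  "subst_ccl \<sigma> Cl = (subst_cl \<sigma> (fst Cl), subst_sdc \<sigma> (snd Cl))"

definition vars_ccl :: "('f, 'p) cclause \<Rightarrow> nat set" where
  "vars_ccl Cl = vars_cl (fst Cl) \<union> lhs_vars (snd Cl)"

definition sdc_resolution :: "('f \<Rightarrow> nat) \<Rightarrow> (('f, 'p) atom \<Rightarrow> ('f, 'p) atom \<Rightarrow> bool) \<Rightarrow>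
    ('f, 'p) cclause \<Rightarrow> ('f, 'p) cclause \<Rightarrow> ('f, 'p) cclause \<Rightarrow> bool" where
  "sdc_resolution ar lt P1 P2 R \<longleftrightarrow>
     (\<exists>\<Gamma>1 \<Delta>1 A \<pi>1 \<Gamma>2 B \<Delta>2 \<pi>2 \<sigma> \<pi>.
        P1 = ((\<Gamma>1, \<Delta>1 + {#A#}), \<pi>1) \<and> P2 = ((\<Gamma>2 + {#B#}, \<Delta>2), \<pi>2) \<and>
        vars_ccl P1 \<inter> vars_ccl P2 = {} \<and>
        is_mgu \<sigma> A B \<and>
        norm (subst_sdc \<sigma> (\<pi>1 + \<pi>2)) = Some \<pi> \<and> solvable ar \<pi> \<and>
        strictly_maximal ar lt (Pos (subst_atom \<sigma> A)) (subst_ccl \<sigma> P1) \<and>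
        sel (fst P1) = {#} \<and>
        (B \<in># sel (fst P2) \<or>
         (sel (fst P2) = {#} \<and> maximal ar lt (Neg (subst_atom \<sigma> B)) (subst_ccl \<sigma> P2))) \<and>
        R = (subst_cl \<sigma> (\<Gamma>1 + \<Gamma>2, \<Delta>1 + \<Delta>2), \<pi>))"

definition sdc_factoring :: "('f \<Rightarrow> nat) \<Rightarrow> (('f, 'p) atom \<Rightarrow> ('f, 'p) atom \<Rightarrow> bool) \<Rightarrow>
    ('f, 'p) cclause \<Rightarrow> ('f, 'p) cclause \<Rightarrow> bool" where
  "sdc_factoring ar lt P R \<longleftrightarrow>
     (\<exists>\<Gamma> \<Delta> A B \<pi>0 \<sigma> \<pi>.
        P = ((\<Gamma>, \<Delta> + {#A, B#}), \<pi>0) \<and>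
        is_mgu \<sigma> A B \<and>
        sel (fst P) = {#} \<and>
        maximal ar lt (Pos (subst_atom \<sigma> A)) (subst_ccl \<sigma> P) \<and>
        norm (subst_sdc \<sigma> \<pi>0) = Some \<pi> \<and> solvable ar \<pi> \<and>
        R = (subst_cl \<sigma> (\<Gamma>, \<Delta> + {#A#}), \<pi>))"

text \<open>Premises of inferences from \<open>N\<close> are variants (renamed copies) of clauses of \<open>N\<close>.\<close>
definition variant_in :: "('f, 'p) cclause set \<Rightarrow> ('f, 'p) cclause \<Rightarrow> bool" where
  "variant_in N P \<longleftrightarrow> (\<exists>\<rho> Cl. Cl \<in> N \<and> inj \<rho> \<and> P = subst_ccl (Var \<circ> \<rho>) Cl)"

definition redundant :: "('f \<Rightarrow> nat) \<Rightarrow> (('f, 'p) atom \<Rightarrow> ('f, 'p) atom \<Rightarrow> bool) \<Rightarrow>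
    ('f, 'p) cclause \<Rightarrow> ('f, 'p) cclause set \<Rightarrow> bool" where
  "redundant ar lt Cl N \<longleftrightarrow>
     (\<forall>D\<in>ground_inst ar {Cl}. \<exists>M. finite M \<and>
        M \<subseteq> {D' \<in> ground_inst ar N. cl_less lt D' D} \<and> entails M D)"

definition saturated :: "('f \<Rightarrow> nat) \<Rightarrow> (('f, 'p) atom \<Rightarrow> ('f, 'p) atom \<Rightarrow> bool) \<Rightarrow>
    ('f, 'p) cclause set \<Rightarrow> bool" where
  "saturated ar lt N \<longleftrightarrow>
     (\<forall>P1 P2 R. variant_in N P1 \<and> variant_in N P2 \<and> sdc_resolution ar lt P1 P2 R \<longrightarrow>
        redundant ar lt R N \<or> ground_inst ar {R} \<subseteq> ground_inst ar N) \<and>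
     (\<forall>P R. variant_in N P \<and> sdc_factoring ar lt P R \<longrightarrow>
        redundant ar lt R N \<or> ground_inst ar {R} \<subseteq> ground_inst ar N)"

section \<open>Partial model\<close>

text \<open>\<open>sel(D) = \<emptyset>\<close> for a ground instance \<open>D\<close>: \<open>D\<close> is an instance of a clause of \<open>N\<close> with empty selection.\<close>
definition sel_empty_inst :: "('f \<Rightarrow> nat) \<Rightarrow> ('f, 'p) cclause set \<Rightarrow> ('f, 'p) clause \<Rightarrow> bool" where
  "sel_empty_inst ar N D \<longleftrightarrow>
     (\<exists>C \<pi> \<delta>. (C, \<pi>) \<in> N \<and> solution ar \<delta> \<pi> \<and> D = subst_cl \<delta> C \<and> sel C = {#})"

definition prod_step :: "('f \<Rightarrow> nat) \<Rightarrow> (('f, 'p) atom \<Rightarrow> ('f, 'p) atom \<Rightarrow> bool) \<Rightarrow>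
    ('f, 'p) cclause set \<Rightarrow> (('f, 'p) clause \<Rightarrow> ('f, 'p) atom set) \<Rightarrow>
    ('f, 'p) clause \<Rightarrow> ('f, 'p) atom set" where
  "prod_step ar lt N rec D =
     {A. D \<in> ground_inst ar N \<and> sel_empty_inst ar N D \<and>
         gstrictly_maximal lt (Pos A) D \<and>
         \<not> true_cl (\<Union>{rec D' | D'. D' \<in> ground_inst ar N \<and> cl_less lt D' D}) D}"

text \<open>\<open>production D\<close> is \<open>\<delta>\<^sub>D\<close>, defined by well-founded recursion on the clause ordering.\<close>
definition production :: "('f \<Rightarrow> nat) \<Rightarrow> (('f, 'p) atom \<Rightarrow> ('f, 'p) atom \<Rightarrow> bool) \<Rightarrow>
    ('f, 'p) cclause set \<Rightarrow> ('f, 'p) clause \<Rightarrow> ('f, 'p) atom set" where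
  "production ar lt N = wfrec {(D, C). cl_less lt D C} (prod_step ar lt N)"

definition interp_at :: "('f \<Rightarrow> nat) \<Rightarrow> (('f, 'p) atom \<Rightarrow> ('f, 'p) atom \<Rightarrow> bool) \<Rightarrow>
    ('f, 'p) cclause set \<Rightarrow> ('f, 'p) clause \<Rightarrow> ('f, 'p) atom set" where
  "interp_at ar lt N C = \<Union>{production ar lt N D | D. D \<in> ground_inst ar N \<and> cl_less lt D C}"

definition partial_model :: "('f \<Rightarrow> nat) \<Rightarrow> (('f, 'p) atom \<Rightarrow> ('f, 'p) atom \<Rightarrow> bool) \<Rightarrow>
    ('f, 'p) cclause set \<Rightarrow> ('f, 'p) atom set" where
  "partial_model ar lt N = \<Union>{production ar lt N C | C. C \<in> ground_inst ar N}"

end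

theory Submission imports Defs begin


lemma subst_Var_id[simp]: "subst Var t = t"
  by (induction t) (auto simp: map_idI)

lemma subst_comp: "subst \<tau> (subst \<sigma> t) = subst (\<lambda>x. subst \<tau> (\<sigma> x)) t"
  by (induction t) auto

lemma subst_agree: "(\<And>x. x \<in> vars_trm t \<Longrightarrow> \<sigma> x = \<tau> x) \<Longrightarrow> subst \<sigma> t = subst \<tau> t"
  by (induction t) auto

lemma vars_subst: "vars_trm (subst \<sigma> t) = (\<Union>x\<in>vars_trm t. vars_trm (\<sigma> x))"
  by (induction t) auto

lemma finite_vars_trm[simp]: "finite (vars_trm t)"
  by (induction t) auto

lemma ground_subst: "(\<And>x. ground_trm (\<delta> x)) \<Longrightarrow> ground_trm (subst \<delta> t)"
  by (auto simp: ground_trm_def vars_subst)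

lemma wf_subst: "wf_trm ar t \<Longrightarrow> (\<And>x. wf_trm ar (\<delta> x)) \<Longrightarrow> wf_trm ar (subst \<delta> t)"
  by (induction t) auto

lemma var_psubterm: "x \<in> vars_trm t \<Longrightarrow> t \<noteq> Var x \<Longrightarrow> Var x \<in> psubterms t"
proof (induction t)
  case (Var y) then show ?case by simp
next
  case (Fun f ts)
  then obtain t where t: "t \<in> set ts" "x \<in> vars_trm t" by auto
  show ?case
  proof (cases "t = Var x")
    case True then show ?thesis using t by auto
  next
    case False then show ?thesis using Fun t by auto
  qed
qed

lemma psubterm_subst: "u \<in> psubterms t \<Longrightarrow> subst \<delta> u \<in> psubterms (subst \<delta> t)"
  by (induction t) auto

lemma psubterm_size: "u \<in> psubterms t \<Longrightarrow> size u < size t"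
proof (induction t)
  case (Var x) then show ?case by simp
next
  case (Fun f ts)
  then obtain t where t: "t \<in> set ts" "u = t \<or> u \<in> psubterms t" by auto
  have "size t < size (Fun f ts)" using t(1)
    by (simp add: less_Suc_eq_le size_list_estimation')
  then show ?case using t Fun by force
qed

lemma occurs: "x \<in> vars_trm t \<Longrightarrow> t \<noteq> Var x \<Longrightarrow> \<tau> x \<noteq> subst \<tau> t"
proof
  assume a: "x \<in> vars_trm t" "t \<noteq> Var x" "\<tau> x = subst \<tau> t"
  have "subst \<tau> (Var x) \<in> psubterms (subst \<tau> t)"
    by (rule psubterm_subst[OF var_psubterm[OF a(1,2)]])
  then have "size (\<tau> x) < size (subst \<tau> t)" using psubterm_size by fastforce
  then show False using a(3) by simp
qed

section \<open>Unification\<close>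

definition unif :: "(nat \<Rightarrow> 'f trm) \<Rightarrow> ('f trm \<times> 'f trm) list \<Rightarrow> bool" where
  "unif \<tau> E \<longleftrightarrow> (\<forall>(a, b)\<in>set E. subst \<tau> a = subst \<tau> b)"

definition evars :: "('f trm \<times> 'f trm) list \<Rightarrow> nat set" where
  "evars E = (\<Union>(a, b)\<in>set E. vars_trm a \<union> vars_trm b)"

definition esize :: "('f trm \<times> 'f trm) list \<Rightarrow> nat" where
  "esize E = sum_list (map (\<lambda>(a, b). size a + size b + 1) E)"

lemma finite_evars[simp]: "finite (evars E)"
  unfolding evars_def by (rule finite_UN_I) (auto split: prod.splits)

lemma esize_zip: "length as = length bs \<Longrightarrow>
  esize (zip as bs) < size (Fun f as) + size (Fun g bs)"
proof (induction as bs rule: list_induct2)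
  case Nil then show ?case by (simp add: esize_def)
next
  case (Cons a as b bs) then show ?case by (simp add: esize_def)
qed

lemma evars_zip: "length as = length bs \<Longrightarrow>
  evars (zip as bs) = vars_trm (Fun f as) \<union> vars_trm (Fun g bs)"
proof (induction as bs rule: list_induct2)
  case Nil then show ?case by (simp add: evars_def)
next
  case (Cons a as b bs) then show ?case by (auto simp: evars_def)
qed

lemma unif_zip: "length as = length bs \<Longrightarrow>
  unif \<tau> (zip as bs) \<longleftrightarrow> subst \<tau> (Fun f as) = subst \<tau> (Fun f bs)"
proof (induction as bs rule: list_induct2)
  case Nil then show ?case by (simp add: unif_def)
next
  case (Cons a as b bs) then show ?case by (auto simp: unif_def)
qed

definition mg :: "(nat \<Rightarrow> 'f trm) \<Rightarrow> ('f trm \<times> 'f trm) list \<Rightarrow> bool" where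
  "mg \<sigma> E \<longleftrightarrow> unif \<sigma> E \<and> (\<forall>\<tau>. unif \<tau> E \<longrightarrow> (\<forall>x. \<tau> x = subst \<tau> (\<sigma> x)))"

lemma mg_elim:
  assumes x: "x \<notin> vars_trm t"
    and IH: "\<exists>\<sigma>'. mg \<sigma>' (map (\<lambda>(a, b). (subst (Var(x := t)) a, subst (Var(x := t)) b)) E)"
  shows "\<exists>\<sigma>. mg \<sigma> ((Var x, t) # E) \<and> mg \<sigma> ((t, Var x) # E)"
proof -
  define \<rho> where "\<rho> = Var(x := t)"
  obtain \<sigma>' where s': "mg \<sigma>' (map (\<lambda>(a, b). (subst \<rho> a, subst \<rho> b)) E)"
    using IH \<rho>_def by blast
  define \<sigma> where "\<sigma> = (\<lambda>v. subst \<sigma>' (\<rho> v))"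
  have st: "subst \<rho> t = t" using x by (auto simp: \<rho>_def intro: subst_agree[where \<tau>=Var, simplified])
  have c: "subst \<sigma> u = subst \<sigma>' (subst \<rho> u)" for u by (simp add: \<sigma>_def subst_comp)
  have u1: "subst \<sigma> (Var x) = subst \<sigma> t"
  proof -
    have "subst \<sigma> t = subst \<sigma>' (subst \<rho> t)" by (rule c)
    then show ?thesis using st by (simp add: \<sigma>_def \<rho>_def)
  qed
  have u2: "unif \<sigma> E"
    using s' by (auto simp: mg_def unif_def c)
  have gen: "\<tau> v = subst \<tau> (\<sigma> v)" if "\<tau> x = subst \<tau> t" "unif \<tau> E" for \<tau> v
  proof -
    have tr: "subst \<tau> (subst \<rho> u) = subst \<tau> u" for u
      by (simp add: subst_comp, rule subst_agree) (auto simp: \<rho>_def that(1))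
    have "unif \<tau> (map (\<lambda>(a, b). (subst \<rho> a, subst \<rho> b)) E)"
      using that(2) by (auto simp: unif_def tr)
    then have all: "\<tau> y = subst \<tau> (\<sigma>' y)" for y using s' by (auto simp: mg_def)
    have all2: "subst \<tau> u = subst \<tau> (subst \<sigma>' u)" for u
      by (simp add: subst_comp, rule subst_agree) (simp add: all)
    have "\<tau> v = subst \<tau> (subst \<rho> (Var v))" using tr[of "Var v"] by simp
    also have "\<dots> = subst \<tau> (\<sigma> v)" by (simp add: \<sigma>_def all2[symmetric])
    finally show ?thesis .
  qed
  have "mg \<sigma> ((Var x, t) # E)"
    unfolding mg_def using u1 u2 gen by (auto simp: unif_def)
  moreover have "mg \<sigma> ((t, Var x) # E)"
    unfolding mg_def using u1 u2 gen by (auto simp: unif_def)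
  ultimately show ?thesis by blast
qed

lemma card_elim:
  assumes "x \<notin> vars_trm t"
  shows "card (evars (map (\<lambda>(a, b). (subst (Var(x := t)) a, subst (Var(x := t)) b)) E))
       < card (evars ((Var x, t) # E))"
proof -
  have vs: "vars_trm (subst (Var(x := t)) u) \<subseteq> (vars_trm u - {x}) \<union> vars_trm t" for u
    by (auto simp: vars_subst split: if_splits)
  have "evars (map (\<lambda>(a, b). (subst (Var(x := t)) a, subst (Var(x := t)) b)) E)
      \<subseteq> evars ((Var x, t) # E) - {x}"
    using vs assms by (fastforce simp: evars_def)
  moreover have "x \<in> evars ((Var x, t) # E)" by (simp add: evars_def)
  ultimately show ?thesis
    by (meson card_Diff1_less finite_evars order_le_less_trans card_mono finite_Diff)
qed

lemma meas_lt: "card (evars a) \<le> card (evars b) \<Longrightarrow> esize a < esize b \<Longrightarrow>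
  (a, b) \<in> inv_image (less_than <*lex*> less_than) (\<lambda>E. (card (evars E), esize E))"
  by (auto simp: le_less)

lemma meas_lt2: "card (evars a) < card (evars b) \<Longrightarrow>
  (a, b) \<in> inv_image (less_than <*lex*> less_than) (\<lambda>E. (card (evars E), esize E))"
  by auto

lemma unif_mg: "unif \<delta> E \<Longrightarrow> \<exists>\<sigma>. mg \<sigma> E"
proof (induction E arbitrary: \<delta> rule: wf_induct[OF wf_inv_image[OF wf_lex_prod[OF wf_less_than wf_less_than],
      of "\<lambda>E. (card (evars E), esize E)"]])
  case (1 E)
  note IH = 1(1)
  show ?case
  proof (cases E)
    case Nil then show ?thesis by (auto simp: mg_def unif_def intro: exI[of _ Var])
  next
    case (Cons p E')
    obtain a b where p: "p = (a, b)" by (cases p)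
    have uE': "unif \<delta> E'" and uab: "subst \<delta> a = subst \<delta> b"
      using 1(2) Cons p by (auto simp: unif_def)
    show ?thesis
    proof (cases "a = b")
      case True
      have "card (evars E') \<le> card (evars E)"
        by (rule card_mono) (auto simp: Cons p evars_def)
      moreover have "esize E' < esize E" using Cons p True by (simp add: esize_def)
      ultimately obtain \<sigma> where "mg \<sigma> E'" using IH uE' meas_lt by blast
      then have "mg \<sigma> E" using Cons p True by (auto simp: mg_def unif_def)
      then show ?thesis by blast
    next
      case ab: False
      show ?thesis
      proof (cases "\<exists>x. a = Var x \<or> b = Var x")
        case True
        then obtain x t where xt: "(a = Var x \<and> b = t) \<or> (b = Var x \<and> a = t)" by blast
        have tx: "t \<noteq> Var x" using xt ab by auto
        have dt: "\<delta> x = subst \<delta> t" using xt uab by auto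
        have x: "x \<notin> vars_trm t" using occurs[OF _ tx, of \<delta>] dt by auto
        let ?E2 = "map (\<lambda>(a, b). (subst (Var(x := t)) a, subst (Var(x := t)) b)) E'"
        have cE: "card (evars ((Var x, t) # E')) = card (evars E)"
          using xt Cons p by (auto simp: evars_def Un_commute)
        have "unif \<delta> ?E2"
        proof -
          have tr: "subst \<delta> (subst (Var(x := t)) u) = subst \<delta> u" for u
            by (simp add: subst_comp, rule subst_agree) (auto simp: dt)
          then show ?thesis using uE' by (auto simp: unif_def)
        qed
        moreover have "card (evars ?E2) < card (evars E)"
          using card_elim[OF x, of E'] cE by simp
        ultimately have "\<exists>\<sigma>'. mg \<sigma>' ?E2" using IH meas_lt2 by blast
        from mg_elim[OF x this] show ?thesis using xt Cons p by auto
      next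
        case False
        then obtain f as g bs where ab2: "a = Fun f as" "b = Fun g bs"
          by (metis trm.exhaust)
        have fg: "f = g" "map (subst \<delta>) as = map (subst \<delta>) bs" using uab ab2 by auto
        then have len: "length as = length bs" by (metis length_map)
        let ?E2 = "zip as bs @ E'"
        have "evars ?E2 = evars E"
          using evars_zip[OF len, of f g] Cons p ab2 by (auto simp: evars_def)
        moreover have "esize ?E2 < esize E"
          using esize_zip[OF len, of f g] Cons p ab2 by (simp add: esize_def)
        moreover have "unif \<delta> ?E2"
          using unif_zip[OF len, of \<delta> f] uE' fg by (auto simp: unif_def)
        ultimately have "(?E2, E) \<in> inv_image (less_than <*lex*> less_than) (\<lambda>E. (card (evars E), esize E))"
          "unif \<delta> ?E2" using meas_lt[of ?E2 E] by auto
        then obtain \<sigma> where s: "mg \<sigma> ?E2" using IH by blast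
        have eqv: "unif \<tau> ?E2 \<longleftrightarrow> unif \<tau> E" for \<tau>
        proof -
          have "unif \<tau> ?E2 \<longleftrightarrow> unif \<tau> (zip as bs) \<and> unif \<tau> E'" by (auto simp: unif_def)
          also have "\<dots> \<longleftrightarrow> unif \<tau> E" using unif_zip[OF len, of \<tau> f] Cons p ab2 fg(1)
            by (auto simp: unif_def)
          finally show ?thesis .
        qed
        have "mg \<sigma> E"
          using s eqv unfolding mg_def by blast
        then show ?thesis by blast
      qed
    qed
  qed
qed


lemma distinct_concat_nth: "distinct (concat xs) \<Longrightarrow> j < length xs \<Longrightarrow> k < length xs \<Longrightarrow> j \<noteq> k \<Longrightarrow>
  set (xs ! j) \<inter> set (xs ! k) = {}"
proof (induction xs arbitrary: j k)
  case Nil then show ?case by simp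
next
  case (Cons x xs)
  show ?case
  proof (cases j)
    case 0
    then obtain k' where kk: "k = Suc k'" using Cons by (cases k) auto
    then have "xs ! k' \<in> set xs" using Cons by simp
    then show ?thesis using 0 Cons kk by fastforce
  next
    case (Suc j')
    show ?thesis
    proof (cases k)
      case 0
      have "xs ! j' \<in> set xs" using Cons Suc by simp
      then show ?thesis using 0 Suc Cons by fastforce
    next
      case (Suc k') then show ?thesis using \<open>j = Suc j'\<close> Cons by auto
    qed
  qed
qed

lemma set_vars_list[simp]: "set (vars_list t) = vars_trm t"
  by (induction t) auto

lemma instance_var: "instance_of u (Var y)"
  unfolding instance_of_def by (rule exI[of _ "\<lambda>_. u"]) simp

lemma instance_vars:
  assumes "length ys = length us" "\<forall>y\<in>set ys. is_var y" "linear_trm (Fun f ys)"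
  shows "instance_of (Fun f us) (Fun f ys)"
proof -
  obtain xs where xs: "ys = map Var xs"
    using assms(2) unfolding is_var_def
    by (metis ex_map_conv)
  have d: "distinct xs" using assms(3) xs by (simp add: linear_trm_def comp_def)
  define \<theta> where "\<theta> v = (case map_of (zip xs us) v of Some u \<Rightarrow> u | None \<Rightarrow> Var v)" for v
  have len: "length xs = length us" using assms(1) xs by simp
  have "map (subst \<theta>) ys = us"
    by (rule nth_equalityI) (auto simp: xs \<theta>_def len map_of_zip_nth[OF len d])
  then show ?thesis unfolding instance_of_def by (intro exI[of _ \<theta>]) simp
qed

lemma instance_arg:
  assumes st: "straight (Fun f ss)" and len: "length ss = length us" and i: "i < length ss"
    and nv: "\<not> is_var (ss ! i)" and inst: "instance_of (us ! i) (ss ! i)"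
  shows "instance_of (Fun f us) (Fun f ss)"
proof -
  obtain \<theta> where th: "subst \<theta> (ss ! i) = us ! i" using inst by (auto simp: instance_of_def)
  have lin: "distinct (concat (map vars_list ss))" using st by (simp add: linear_trm_def)
  obtain k where k: "\<forall>j<length ss. j \<noteq> k \<longrightarrow> is_var (ss ! j)" using st by auto
  have oth: "\<forall>j<length ss. j \<noteq> i \<longrightarrow> is_var (ss ! j)"
    using k nv i by metis
  have disj: "vars_trm (ss ! j) \<inter> vars_trm (ss ! l) = {}"
    if "j < length ss" "l < length ss" "j \<noteq> l" for j l
    using distinct_concat_nth[OF lin, of j l] that by simp
  define P where "P v j \<longleftrightarrow> j < length ss \<and> j \<noteq> i \<and> ss ! j = Var v" for v j
  have uniq: "P v j \<Longrightarrow> P v l \<Longrightarrow> j = l" for v j l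
    using disj[of j l] by (auto simp: P_def)
  define \<theta>' where "\<theta>' v = (if v \<in> vars_trm (ss ! i) then \<theta> v
      else if \<exists>j. P v j then us ! (SOME j. P v j) else Var v)" for v
  have "map (subst \<theta>') ss = us"
  proof (rule nth_equalityI)
    show "length (map (subst \<theta>') ss) = length us" using len by simp
  next
    fix j assume j: "j < length (map (subst \<theta>') ss)"
    show "map (subst \<theta>') ss ! j = us ! j"
    proof (cases "j = i")
      case True
      have "subst \<theta>' (ss ! i) = subst \<theta> (ss ! i)"
        by (rule subst_agree) (simp add: \<theta>'_def)
      then show ?thesis using True th j by simp
    next
      case False
      then obtain v where v: "ss ! j = Var v" using oth j by (auto simp: is_var_def)
      have Pj: "P v j" using v j False by (simp add: P_def)
      have "v \<notin> vars_trm (ss ! i)" using disj[of j i] j i False v by auto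
      then have "\<theta>' v = us ! j"
        using Pj uniq someI[of "P v", OF Pj] by (auto simp: \<theta>'_def)
      then show ?thesis using v j by simp
    qed
  qed
  then show ?thesis unfolding instance_of_def by (intro exI[of _ \<theta>']) simp
qed

section \<open>Normalisation\<close>

definition inv_n :: "('f \<Rightarrow> nat) \<Rightarrow> (nat \<Rightarrow> 'f trm) \<Rightarrow> 'f sdc option \<Rightarrow> bool" where
  "inv_n ar \<tau> r \<longleftrightarrow> (case r of None \<Rightarrow> False
     | Some \<pi> \<Rightarrow> solution ar \<tau> \<pi> \<and> (\<forall>(t, s)\<in>set_mset \<pi>. straight s))"

lemma inv_step:
  assumes "norm_step r r'" "inv_n ar \<tau> r"
  shows "inv_n ar \<tau> r'"
  using assms
proof (induction rule: norm_step.induct)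
  case (r1 \<pi> f ts y)
  then show ?case by (auto simp: inv_n_def solution_def instance_var)
next
  case (r2 ys ts \<pi> f)
  then have "straight (Fun f ys)" by (auto simp: inv_n_def)
  then have "linear_trm (Fun f ys)" by simp
  then have "instance_of (subst \<tau> (Fun f ts)) (Fun f ys)"
    using r2 by (auto intro!: instance_vars)
  then show ?case using r2 by (auto simp: inv_n_def solution_def)
next
  case (r3 ss ts i \<pi> f)
  then have st: "straight (Fun f ss)" by (auto simp: inv_n_def)
  have ni: "\<not> instance_of (subst \<tau> (Fun f ts)) (Fun f ss)"
    using r3 by (auto simp: inv_n_def solution_def)
  have "\<not> instance_of (subst \<tau> (ts ! i)) (ss ! i)"
  proof
    assume "instance_of (subst \<tau> (ts ! i)) (ss ! i)"
    then have "instance_of (Fun f (map (subst \<tau>) ts)) (Fun f ss)"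
      using instance_arg[OF st, of "map (subst \<tau>) ts" i] r3 by auto
    then show False using ni by simp
  qed
  moreover have "straight (ss ! i)" using st r3 by (auto simp: nth_mem)
  ultimately show ?case using r3 by (auto simp: inv_n_def solution_def)
next
  case (r4 f g \<pi> ts ss)
  then show ?case by (auto simp: inv_n_def solution_def)
next
  case (r5 \<pi> x s \<sigma>)
  then show ?case by (auto simp: inv_n_def solution_def)
qed

lemma inv_steps: "norm_step\<^sup>*\<^sup>* r r' \<Longrightarrow> inv_n ar \<tau> r \<Longrightarrow> inv_n ar \<tau> r'"
  by (induction rule: rtranclp_induct) (auto intro: inv_step)

definition nmeas :: "'f sdc option \<Rightarrow> nat" where
  "nmeas r = (case r of None \<Rightarrow> 0 | Some \<pi> \<Rightarrow> 1 + sum_mset (image_mset (\<lambda>(t, s). size t + size s + 1) \<pi>))"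

lemma nmeas_step: "norm_step r r' \<Longrightarrow> nmeas r' < nmeas r"
proof (induction rule: norm_step.induct)
  case (r3 ss ts i \<pi> f)
  have "ts ! i \<in> set ts" "ss ! i \<in> set ss" using r3 by auto
  then have "size (ts ! i) < size (Fun f ts)" "size (ss ! i) < size (Fun f ss)"
    by (simp_all add: less_Suc_eq_le size_list_estimation')
  then show ?case by (simp add: nmeas_def)
qed (auto simp: nmeas_def)

lemma nf_exists: "\<exists>r'. norm_step\<^sup>*\<^sup>* r r' \<and> (\<forall>r''. \<not> norm_step r' r'')"
proof (induction r rule: measure_induct_rule[of nmeas])
  case (less r)
  show ?case
  proof (cases "\<exists>r''. norm_step r r''")
    case True
    then obtain r'' where s: "norm_step r r''" by blast
    then obtain r' where "norm_step\<^sup>*\<^sup>* r'' r'" "\<forall>r''. \<not> norm_step r' r''"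
      using less nmeas_step by blast
    then show ?thesis using s by (meson converse_rtranclp_into_rtranclp)
  next
    case False then show ?thesis by blast
  qed
qed

lemma norm_sol:
  assumes "solution ar \<tau> \<pi>0" "\<forall>(t, s)\<in>set_mset \<pi>0. straight s"
  shows "\<exists>\<pi>. norm \<pi>0 = Some \<pi> \<and> solution ar \<tau> \<pi> \<and> solvable ar \<pi>"
proof -
  let ?P = "\<lambda>r. norm_step\<^sup>*\<^sup>* (Some \<pi>0) r \<and> (\<forall>r'. \<not> norm_step r r')"
  have "?P (norm \<pi>0)" unfolding norm_def using nf_exists by (rule someI_ex)
  then have "inv_n ar \<tau> (norm \<pi>0)"
    using inv_steps assms by (fastforce simp: inv_n_def)
  then show ?thesis by (auto simp: inv_n_def solvable_def split: option.splits)
qed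

lemma atom_mgu:
  assumes "subst_atom \<delta> (Pred P s) = subst_atom \<delta> (Pred Q t)"
  shows "\<exists>\<sigma>. is_mgu \<sigma> (Pred P s) (Pred Q t) \<and>
     (\<forall>\<tau>. subst_atom \<tau> (Pred P s) = subst_atom \<tau> (Pred Q t) \<longrightarrow> (\<forall>x. \<tau> x = subst \<tau> (\<sigma> x)))"
proof -
  have PQ: "P = Q" and u: "unif \<delta> [(s, t)]" using assms by (auto simp: unif_def)
  obtain \<sigma> where m: "mg \<sigma> [(s, t)]" using unif_mg[OF u] by blast
  have gen: "\<forall>\<tau>. subst_atom \<tau> (Pred P s) = subst_atom \<tau> (Pred Q t) \<longrightarrow> (\<forall>x. \<tau> x = subst \<tau> (\<sigma> x))"
    using m by (auto simp: mg_def unif_def)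
  have "is_mgu \<sigma> (Pred P s) (Pred Q t)"
    unfolding is_mgu_def using m gen PQ by (auto simp: mg_def unif_def)
  then show ?thesis using gen by blast
qed


lemma subst_atom_comp: "subst_atom \<tau> (subst_atom \<sigma> A) = subst_atom (\<lambda>x. subst \<tau> (\<sigma> x)) A"
  by (cases A) (auto simp: subst_comp)

lemma subst_lit_comp: "subst_lit \<tau> (subst_lit \<sigma> L) = subst_lit (\<lambda>x. subst \<tau> (\<sigma> x)) L"
  by (cases L) (auto simp: subst_atom_comp)

lemma subst_cl_comp: "subst_cl \<tau> (subst_cl \<sigma> C) = subst_cl (\<lambda>x. subst \<tau> (\<sigma> x)) C"
  by (auto simp: subst_cl_def subst_atom_comp multiset.map_comp comp_def)

lemma subst_atom_Var[simp]: "subst_atom Var A = A"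
  by (cases A) auto

lemma subst_atom_Var_id: "subst_atom Var = id"
  by (rule ext) simp

lemma subst_cl_Var[simp]: "subst_cl Var C = C"
  by (simp add: subst_cl_def subst_atom_Var_id)

lemma subst_sdc_Var[simp]: "subst_sdc Var \<pi> = \<pi>"
  by (auto simp: subst_sdc_def case_prod_unfold)

lemma fix_eq: "(\<forall>x. \<tau> x = subst \<tau> (\<sigma> x)) \<Longrightarrow> (\<lambda>x. subst \<tau> (\<sigma> x)) = \<tau>"
  by auto

lemma lits_subst: "lits (subst_cl \<sigma> C) = image_mset (subst_lit \<sigma>) (lits C)"
  by (simp add: lits_def subst_cl_def multiset.map_comp comp_def)

lemma lits_plus: "lits (a + b, c + d) = lits (a, c) + lits (b, d)"
  by (simp add: lits_def)

lemma subst_atom_agree: "(\<And>x. x \<in> vars_atom A \<Longrightarrow> \<sigma> x = \<tau> x) \<Longrightarrow> subst_atom \<sigma> A = subst_atom \<tau> A"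
  by (cases A) (auto intro: subst_agree)

lemma subst_cl_agree: "(\<And>x. x \<in> vars_cl C \<Longrightarrow> \<sigma> x = \<tau> x) \<Longrightarrow> subst_cl \<sigma> C = subst_cl \<tau> C"
  unfolding subst_cl_def vars_cl_def
  by (auto intro!: image_mset_cong subst_atom_agree)

lemma solution_fix: "(\<forall>x. \<tau> x = subst \<tau> (\<sigma> x)) \<Longrightarrow> solution ar \<tau> \<pi> \<Longrightarrow> solution ar \<tau> (subst_sdc \<sigma> \<pi>)"
  by (auto simp: solution_def subst_sdc_def subst_comp fix_eq)

lemma solution_plus: "solution ar \<tau> (a + b) \<longleftrightarrow> solution ar \<tau> a \<and> solution ar \<tau> b"
  by (auto simp: solution_def)

section \<open>Lifting maximality\<close>

lemma sm_lift:
  assumes L: "L \<in># lits C" and fx: "\<forall>x. \<tau> x = subst \<tau> (\<sigma> x)" and sol: "solution ar \<tau> \<pi>"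
    and g: "gstrictly_maximal lt (subst_lit \<tau> L) (subst_cl \<tau> C)"
  shows "strictly_maximal ar lt (subst_lit \<sigma> L) (subst_ccl \<sigma> (C, \<pi>))"
proof -
  have fe: "subst_lit \<tau> (subst_lit \<sigma> X) = subst_lit \<tau> X" for X
    by (simp add: subst_lit_comp fix_eq[OF fx])
  have "\<forall>B\<in>set_mset (lits (subst_cl \<sigma> C) - {#subst_lit \<sigma> L#}).
          lit_less lt (subst_lit \<tau> B) (subst_lit \<tau> (subst_lit \<sigma> L))"
  proof
    fix B assume "B \<in> set_mset (lits (subst_cl \<sigma> C) - {#subst_lit \<sigma> L#})"
    then have "B \<in># image_mset (subst_lit \<sigma>) (lits C - {#L#})"
      using L by (simp add: lits_subst image_mset_Diff)
    then obtain B0 where B0: "B0 \<in># lits C - {#L#}" "B = subst_lit \<sigma> B0" by auto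
    have "subst_lit \<tau> B0 \<in># image_mset (subst_lit \<tau>) (lits C - {#L#})" using B0 by auto
    then have "subst_lit \<tau> B0 \<in># lits (subst_cl \<tau> C) - {#subst_lit \<tau> L#}"
      using L by (simp add: lits_subst image_mset_Diff)
    then have "lit_less lt (subst_lit \<tau> B0) (subst_lit \<tau> L)"
      using g by (auto simp: gstrictly_maximal_def)
    then show "lit_less lt (subst_lit \<tau> B) (subst_lit \<tau> (subst_lit \<sigma> L))"
      by (simp only: B0(2) fe)
  qed
  then show ?thesis
    unfolding strictly_maximal_def using L solution_fix[OF fx sol]
    by (auto simp: subst_ccl_def lits_subst)
qed

lemma m_lift:
  assumes L: "L \<in># lits C" and fx: "\<forall>x. \<tau> x = subst \<tau> (\<sigma> x)" and sol: "solution ar \<tau> \<pi>"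
    and g: "\<forall>B\<in>set_mset (lits (subst_cl \<tau> C) - {#subst_lit \<tau> L#}). lit_le lt B (subst_lit \<tau> L)"
  shows "maximal ar lt (subst_lit \<sigma> L) (subst_ccl \<sigma> (C, \<pi>))"
proof -
  have fe: "subst_lit \<tau> (subst_lit \<sigma> X) = subst_lit \<tau> X" for X
    by (simp add: subst_lit_comp fix_eq[OF fx])
  have "\<forall>B\<in>set_mset (lits (subst_cl \<sigma> C) - {#subst_lit \<sigma> L#}).
          lit_le lt (subst_lit \<tau> B) (subst_lit \<tau> (subst_lit \<sigma> L))"
  proof
    fix B assume "B \<in> set_mset (lits (subst_cl \<sigma> C) - {#subst_lit \<sigma> L#})"
    then have "B \<in># image_mset (subst_lit \<sigma>) (lits C - {#L#})"
      using L by (simp add: lits_subst image_mset_Diff)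
    then obtain B0 where B0: "B0 \<in># lits C - {#L#}" "B = subst_lit \<sigma> B0" by auto
    have "subst_lit \<tau> B0 \<in># image_mset (subst_lit \<tau>) (lits C - {#L#})" using B0 by auto
    then have "subst_lit \<tau> B0 \<in># lits (subst_cl \<tau> C) - {#subst_lit \<tau> L#}"
      using L by (simp add: lits_subst image_mset_Diff)
    then have "lit_le lt (subst_lit \<tau> B0) (subst_lit \<tau> L)"
      using g by auto
    then show "lit_le lt (subst_lit \<tau> B) (subst_lit \<tau> (subst_lit \<sigma> L))"
      by (simp only: B0(2) fe)
  qed
  then show ?thesis
    unfolding maximal_def using L solution_fix[OF fx sol]
    by (auto simp: subst_ccl_def lits_subst)
qed

lemma ms_less: "J \<noteq> {#} \<Longrightarrow> \<forall>k\<in>#K. \<exists>j\<in>#J. (k, j) \<in> r \<Longrightarrow> (I + K, I + J) \<in> mult r"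
  by (rule one_step_implies_mult)

lemma ms_less0: "J \<noteq> {#} \<Longrightarrow> \<forall>k\<in>#K. \<exists>j\<in>#J. (k, j) \<in> r \<Longrightarrow> (K, J) \<in> mult r"
  using one_step_implies_mult[of J K r "{#}"] by simp

lemma lit_less_trans: "lit_less lt a b \<Longrightarrow> lit_less lt b c \<Longrightarrow> lit_less lt a c"
  unfolding lit_less_def mult_def by (meson trancl_trans)

lemma cl_less_trans: "cl_less lt a b \<Longrightarrow> cl_less lt b c \<Longrightarrow> cl_less lt a c"
  unfolding cl_less_def mult_def by (meson trancl_trans)

lemma pos_neg_same: "lit_less lt (Pos A) (Neg A)"
  unfolding lit_less_def lit_ms_def using ms_less[of "{#A#}" "{#}" _ "{#A#}"] by simp

lemma pos_pos: "lt A B \<Longrightarrow> lit_less lt (Pos A) (Pos B)"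
  unfolding lit_less_def lit_ms_def using ms_less0[of "{#B#}" "{#A#}"] by simp

lemma neg_pos: "lt A B \<Longrightarrow> lit_less lt (Neg A) (Pos B)"
  unfolding lit_less_def lit_ms_def using ms_less0[of "{#B#}" "{#A, A#}"] by simp

lemma pos_neg: "lt A B \<Longrightarrow> lit_less lt (Pos A) (Neg B)"
  unfolding lit_less_def lit_ms_def using ms_less0[of "{#B, B#}" "{#A#}"] by simp

lemma wf_lit: "wf {(x, y). lt x y} \<Longrightarrow> wf {(L, L'). lit_less lt L L'}"
proof -
  assume w: "wf {(x, y). lt x y}"
  have "{(L, L'). lit_less lt L L'} = inv_image (mult {(x, y). lt x y}) lit_ms"
    by (auto simp: lit_less_def inv_image_def)
  then show ?thesis using wf_mult[OF w] by (simp add: wf_inv_image)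
qed

lemma wf_cl: "wf {(x, y). lt x y} \<Longrightarrow> wf {(D, C). cl_less lt D C}"
proof -
  assume w: "wf {(x, y). lt x y}"
  have "{(D, C). cl_less lt D C} = inv_image (mult {(L, L'). lit_less lt L L'}) lits"
    by (auto simp: cl_less_def inv_image_def)
  then show ?thesis using wf_mult[OF wf_lit[OF w]] by (simp add: wf_inv_image)
qed

lemma production_eq:
  assumes "wf {(x, y). lt x y}"
  shows "production ar lt N D = prod_step ar lt N (production ar lt N) D"
proof -
  let ?R = "{(D, C). cl_less lt D C}"
  have "production ar lt N D = prod_step ar lt N (cut (production ar lt N) ?R D) D"
    unfolding production_def by (rule wfrec[OF wf_cl[OF assms]])
  also have "\<dots> = prod_step ar lt N (production ar lt N) D"
  proof -
    have "{cut (production ar lt N) ?R D D' | D'. D' \<in> ground_inst ar N \<and> cl_less lt D' D}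
        = {production ar lt N D' | D'. D' \<in> ground_inst ar N \<and> cl_less lt D' D}"
      by (rule Collect_cong) (auto simp: cut_def)
    then show ?thesis unfolding prod_step_def by simp
  qed
  finally show ?thesis .
qed


section \<open>Renaming\<close>

lemma rn_inj: "inj \<rho> \<Longrightarrow> subst (Var \<circ> \<rho>) s = subst (Var \<circ> \<rho>) t \<Longrightarrow> s = t"
proof (induction s arbitrary: t)
  case (Var x) then show ?case by (cases t) (auto dest: injD)
next
  case (Fun f ss)
  obtain ts where t: "t = Fun f ts" using Fun.prems by (cases t) auto
  have m: "map (subst (Var \<circ> \<rho>)) ss = map (subst (Var \<circ> \<rho>)) ts" using Fun.prems t by (simp add: comp_def)
  have len: "length ss = length ts" using m by (metis length_map)
  have "ss = ts"
  proof (rule nth_equalityI[OF len])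
    fix i assume i: "i < length ss"
    have "subst (Var \<circ> \<rho>) (ss ! i) = subst (Var \<circ> \<rho>) (ts ! i)"
      using m i len by (metis nth_map)
    then show "ss ! i = ts ! i" using Fun.IH[OF nth_mem[OF i] Fun.prems(1)] by blast
  qed
  then show ?case using t by simp
qed

lemma rn_is_var[simp]: "is_var (subst (Var \<circ> \<rho>) t) \<longleftrightarrow> is_var t"
  by (cases t) (auto simp: is_var_def)

lemma rn_vars: "vars_trm (subst (Var \<circ> \<rho>) t) = \<rho> ` vars_trm t"
  by (auto simp: vars_subst)

lemma rn_vars_atom: "vars_atom (subst_atom (Var \<circ> \<rho>) A) = \<rho> ` vars_atom A"
  by (cases A) (auto simp: rn_vars)

lemma rn_Pred_mem: "Pred S t \<in># image_mset (subst_atom (Var \<circ> \<rho>)) \<Gamma> \<longleftrightarrow>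
    (\<exists>t0. Pred S t0 \<in># \<Gamma> \<and> t = subst (Var \<circ> \<rho>) t0)"
proof
  assume "Pred S t \<in># image_mset (subst_atom (Var \<circ> \<rho>)) \<Gamma>"
  then obtain A where A: "A \<in># \<Gamma>" "subst_atom (Var \<circ> \<rho>) A = Pred S t" by auto
  then show "\<exists>t0. Pred S t0 \<in># \<Gamma> \<and> t = subst (Var \<circ> \<rho>) t0" by (cases A) auto
next
  assume "\<exists>t0. Pred S t0 \<in># \<Gamma> \<and> t = subst (Var \<circ> \<rho>) t0"
  then obtain t0 where "Pred S t0 \<in># \<Gamma>" "t = subst (Var \<circ> \<rho>) t0" by blast
  then show "Pred S t \<in># image_mset (subst_atom (Var \<circ> \<rho>)) \<Gamma>"
    by (metis image_eqI set_image_mset subst_atom.simps(1))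
qed

lemma sel_rename:
  fixes C :: "('f, 'p) clause"
  assumes inj: "inj \<rho>"
  shows "sel (subst_cl (Var \<circ> \<rho>) C) = image_mset (subst_atom (Var \<circ> \<rho>)) (sel C)"
proof -
  let ?r = "subst (Var \<circ> \<rho>)"
  let ?f = "subst_atom (Var \<circ> \<rho>)"
  obtain \<Gamma> \<Delta> where C: "C = (\<Gamma>, \<Delta>)" by (cases C)
  define vD where "vD = (\<Union>A\<in>set_mset \<Delta>. vars_atom A)"
  define args where "args = {t. \<exists>S. Pred S t \<in># \<Gamma>}"
  define vD' where "vD' = (\<Union>A\<in>set_mset (image_mset ?f \<Delta>). vars_atom A)"
  define args' where "args' = {t. \<exists>S. Pred S t \<in># image_mset ?f \<Gamma>}"
  have vD': "vD' = \<rho> ` vD" by (auto simp: vD'_def vD_def rn_vars_atom)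
  have args': "args' = ?r ` args" unfolding args'_def args_def rn_Pred_mem by blast
  define P where "P = (\<lambda>A::('f, 'p) atom. case A of
        Pred S t \<Rightarrow>
          \<not> is_var t
        \<or> ((\<forall>t'\<in>args. is_var t') \<and> (\<forall>x. t = Var x \<longrightarrow> x \<notin> vD))
        \<or> (args \<subseteq> Var ` vD \<and> (\<exists>P. Pred P t \<in># \<Delta>))
      | Eq s t \<Rightarrow> False)"
  define P' where "P' = (\<lambda>A::('f, 'p) atom. case A of
        Pred S t \<Rightarrow>
          \<not> is_var t
        \<or> ((\<forall>t'\<in>args'. is_var t') \<and> (\<forall>x. t = Var x \<longrightarrow> x \<notin> vD'))
        \<or> (args' \<subseteq> Var ` vD' \<and> (\<exists>P. Pred P t \<in># image_mset ?f \<Delta>))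
      | Eq s t \<Rightarrow> False)"
  have a1: "(\<forall>t'\<in>args'. is_var t') \<longleftrightarrow> (\<forall>t'\<in>args. is_var t')" by (simp add: args')
  have a2: "(\<forall>x. ?r t = Var x \<longrightarrow> x \<notin> vD') \<longleftrightarrow> (\<forall>x. t = Var x \<longrightarrow> x \<notin> vD)" for t
    using inj by (cases t) (auto simp: vD' inj_image_mem_iff)
  have a3: "args' \<subseteq> Var ` vD' \<longleftrightarrow> args \<subseteq> Var ` vD"
  proof -
    have "?r t0 \<in> Var ` vD' \<longleftrightarrow> t0 \<in> Var ` vD" for t0
      using inj by (cases t0) (auto simp: vD' inj_image_mem_iff dest: injD)
    then show ?thesis unfolding args' by blast
  qed
  have a4: "(\<exists>P. Pred P (?r t) \<in># image_mset ?f \<Delta>) \<longleftrightarrow> (\<exists>P. Pred P t \<in># \<Delta>)" for t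
    unfolding rn_Pred_mem using rn_inj[OF inj] by blast
  have PP: "P' (?f A) \<longleftrightarrow> P A" for A
    by (cases A) (simp_all only: P_def P'_def atom.case subst_atom.simps a1 a2 a3 a4 rn_is_var)
  have "sel (subst_cl (Var \<circ> \<rho>) C) = filter_mset P' (image_mset ?f \<Gamma>)"
    unfolding sel_def Let_def subst_cl_def C fst_conv snd_conv P'_def vD'_def args'_def by (rule refl)
  also have "\<dots> = image_mset ?f (filter_mset P \<Gamma>)"
    by (simp add: filter_mset_image_mset PP)
  also have "\<dots> = image_mset ?f (sel C)"
    unfolding sel_def Let_def C fst_conv snd_conv P_def vD_def args_def by (rule refl)
  finally show ?thesis .
qed

lemma vars_cl_rename: "vars_cl (subst_cl (Var \<circ> \<rho>) C) = \<rho> ` vars_cl C"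
  by (auto simp: vars_cl_def subst_cl_def rn_vars_atom)

lemma lhs_vars_rename: "lhs_vars (subst_sdc (Var \<circ> \<rho>) \<pi>) = \<rho> ` lhs_vars \<pi>"
  unfolding lhs_vars_def subst_sdc_def by (force simp: rn_vars case_prod_unfold)

lemma vars_ccl_rename: "vars_ccl (subst_ccl (Var \<circ> \<rho>) Cl) = \<rho> ` vars_ccl Cl"
  by (auto simp: vars_ccl_def subst_ccl_def vars_cl_rename lhs_vars_rename)

lemma finite_vars_atom[simp]: "finite (vars_atom A)"
  by (cases A) auto

lemma finite_vars_ccl: "finite (vars_ccl Cl)"
  by (auto simp: vars_ccl_def vars_cl_def lhs_vars_def)

lemma ground_atom_subst: "grounding ar \<delta> \<Longrightarrow> ground_atom (subst_atom \<delta> A)"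
  by (cases A) (auto simp: ground_atom_def grounding_def ground_trm_def vars_subst)

lemma wf_atom_subst: "grounding ar \<delta> \<Longrightarrow> wf_atom ar A \<Longrightarrow> wf_atom ar (subst_atom \<delta> A)"
  by (cases A) (auto simp: grounding_def intro: wf_subst)


lemma finite_max:
  assumes "finite S" "S \<noteq> {}" "transp lt" "\<forall>a. \<not> lt a a"
  shows "\<exists>a\<in>S. \<forall>b\<in>S. \<not> lt a b"
  using assms(1,2)
proof (induction S rule: finite_ne_induct)
  case (singleton x) then show ?case using assms(4) by auto
next
  case (insert x F)
  then obtain a where a: "a \<in> F" "\<forall>b\<in>F. \<not> lt a b" by blast
  show ?case
  proof (cases "lt a x")
    case True
    have "\<forall>b\<in>insert x F. \<not> lt x b"
      using a True assms(3,4) by (metis insert_iff transpD)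
    then show ?thesis by blast
  next
  case False then show ?thesis using a by blast
  qed
qed

lemma mem_diff_single: "b \<noteq> a \<Longrightarrow> b \<in># M \<Longrightarrow> b \<in># M - {#a#}"
  by (simp add: in_diff_count not_in_iff)

lemma sol_comp: "grounding ar \<tau> \<Longrightarrow> solution ar (\<lambda>x. subst \<tau> (\<sigma> x)) \<pi> \<Longrightarrow> solution ar \<tau> (subst_sdc \<sigma> \<pi>)"
  by (auto simp: solution_def subst_sdc_def subst_comp)

lemma sol_agree: "grounding ar \<tau> \<Longrightarrow> (\<forall>x\<in>lhs_vars \<pi>. \<tau> x = \<delta> x) \<Longrightarrow> solution ar \<delta> \<pi> \<Longrightarrow> solution ar \<tau> \<pi>"
proof -
  assume a: "grounding ar \<tau>" "\<forall>x\<in>lhs_vars \<pi>. \<tau> x = \<delta> x" "solution ar \<delta> \<pi>"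
  have "subst \<tau> t = subst \<delta> t" if "(t, s) \<in># \<pi>" for t s
    using a(2) that by (intro subst_agree) (force simp: lhs_vars_def)
  then show ?thesis using a by (auto simp: solution_def)
qed

lemma straight_sdc: "is_sdc \<pi> \<Longrightarrow> \<forall>(t, s)\<in>set_mset \<pi>. straight s"
  by (auto simp: is_sdc_def)

lemma straight_subst_sdc: "\<forall>(t, s)\<in>set_mset \<pi>. straight s \<Longrightarrow> \<forall>(t, s)\<in>set_mset (subst_sdc \<sigma> \<pi>). straight s"
  by (auto simp: subst_sdc_def)

lemma sel_sub: "B \<in># sel C \<Longrightarrow> B \<in># fst C \<and> (\<exists>S t. B = Pred S t)"
  unfolding sel_def Let_def by (auto split: atom.splits)

lemma sel_empty_props:
  assumes se: "sel C = {#}" and noeq: "\<forall>A\<in>set_mset (fst C). \<forall>s t. A \<noteq> Eq s t"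
    and A: "Pred S t \<in># fst C"
  shows "\<exists>x. t = Var x \<and> x \<in> (\<Union>A\<in>set_mset (snd C). vars_atom A) \<and> \<not> (\<exists>P. Pred P t \<in># snd C)"
proof -
  define vD where "vD = (\<Union>A\<in>set_mset (snd C). vars_atom A)"
  define args where "args = {t. \<exists>S. Pred S t \<in># fst C}"
  have np: "\<not> (\<not> is_var t'
        \<or> ((\<forall>t'\<in>args. is_var t') \<and> (\<forall>x. t' = Var x \<longrightarrow> x \<notin> vD))
        \<or> (args \<subseteq> Var ` vD \<and> (\<exists>P. Pred P t' \<in># snd C)))" if "Pred S' t' \<in># fst C" for S' t'
    using se that unfolding sel_def Let_def vD_def args_def
    by (auto simp: filter_mset_eq_mempty_iff dest!: spec[of _ "Pred S' t'"])
  have allv: "\<forall>t'\<in>args. is_var t'" using np by (auto simp: args_def)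
  have inv: "\<exists>x. t' = Var x \<and> x \<in> vD" if "Pred S' t' \<in># fst C" for S' t'
    using np[OF that] allv by (auto simp: is_var_def)
  have "args \<subseteq> Var ` vD" using inv by (auto simp: args_def)
  then show ?thesis using np[OF A] inv[OF A] by (auto simp: vD_def)
qed

locale cmpl =
  fixes N :: "('f, 'p) cclause set" and ar :: "'f \<Rightarrow> nat" and lt :: "('f, 'p) atom \<Rightarrow> ('f, 'p) atom \<Rightarrow> bool"
  assumes ord: "atom_ordering ar lt" and msl: "\<forall>Cl\<in>N. msl_sdc Cl \<and> wf_ccl ar Cl"
    and sat: "saturated ar lt N"
begin

abbreviation "G \<equiv> ground_inst ar N"
abbreviation "IN \<equiv> partial_model ar lt N"

lemma wf_lt: "wf {(x, y). lt x y}" using ord by (simp add: atom_ordering_def)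
lemma irr: "\<not> lt a a" using ord by (simp add: atom_ordering_def)
lemma trl: "transp lt" using ord by (simp add: atom_ordering_def)
lemma total: "ground_atom A \<Longrightarrow> wf_atom ar A \<Longrightarrow> ground_atom B \<Longrightarrow> wf_atom ar B \<Longrightarrow> A \<noteq> B \<Longrightarrow> lt A B \<or> lt B A"
  using ord by (simp add: atom_ordering_def)

lemma G_elim: "D \<in> G \<Longrightarrow> \<exists>C \<pi> \<delta>. (C, \<pi>) \<in> N \<and> solution ar \<delta> \<pi> \<and> D = subst_cl \<delta> C"
  by (auto simp: ground_inst_def)

lemma G_atoms: "D \<in> G \<Longrightarrow> A \<in># fst D + snd D \<Longrightarrow> ground_atom A \<and> wf_atom ar A"
proof -
  assume D: "D \<in> G" "A \<in># fst D + snd D"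
  then obtain C \<pi> \<delta> where C: "(C, \<pi>) \<in> N" "solution ar \<delta> \<pi>" "D = subst_cl \<delta> C" using G_elim by blast
  then obtain A0 where A0: "A0 \<in># fst C + snd C" "A = subst_atom \<delta> A0"
    using D(2) by (auto simp: subst_cl_def)
  have "wf_atom ar A0" using msl C(1) A0(1) by (auto simp: wf_ccl_def)
  moreover have "grounding ar \<delta>" using C(2) by (simp add: solution_def)
  ultimately show ?thesis using A0 ground_atom_subst wf_atom_subst by blast
qed

lemma prod_char: "A \<in> production ar lt N D \<longleftrightarrow> D \<in> G \<and> sel_empty_inst ar N D \<and>
   gstrictly_maximal lt (Pos A) D \<and> \<not> true_cl (interp_at ar lt N D) D"
  by (subst production_eq[OF wf_lt]) (simp add: prod_step_def interp_at_def)

lemma pos_lits: "Pos A \<in># lits C \<longleftrightarrow> A \<in># snd C"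
  by (auto simp: lits_def)

lemma neg_lits: "Neg A \<in># lits C \<longleftrightarrow> A \<in># fst C"
  by (auto simp: lits_def)

lemma prod_snd: "A \<in> production ar lt N D \<Longrightarrow> A \<in># snd D"
  by (auto simp: prod_char gstrictly_maximal_def pos_lits)

lemma prod_G: "A \<in> production ar lt N D \<Longrightarrow> D \<in> G"
  by (simp add: prod_char)

lemma in_IN: "A \<in> IN \<longleftrightarrow> (\<exists>D. A \<in> production ar lt N D)"
proof
  assume "\<exists>D. A \<in> production ar lt N D"
  then obtain D where D: "A \<in> production ar lt N D" by blast
  then have "D \<in> G" by (rule prod_G)
  then show "A \<in> IN" using D unfolding partial_model_def by blast
qed (auto simp: partial_model_def)

lemma interp_sub: "interp_at ar lt N D \<subseteq> IN"
  by (auto simp: interp_at_def partial_model_def)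

lemma in_interp:
  assumes A: "A \<in> production ar lt N E" and L: "L \<in># lits D" and less: "lit_less lt (Pos A) L"
  shows "A \<in> interp_at ar lt N D"
proof -
  have E: "E \<in> G" "gstrictly_maximal lt (Pos A) E" using A by (auto simp: prod_char)
  have "\<forall>k\<in>#lits E. \<exists>j\<in>#lits D. (k, j) \<in> {(L, L'). lit_less lt L L'}"
  proof
    fix k assume k: "k \<in># lits E"
    show "\<exists>j\<in>#lits D. (k, j) \<in> {(L, L'). lit_less lt L L'}"
    proof (cases "k = Pos A")
      case True then show ?thesis using L less by blast
    next
      case False
      then have "k \<in># lits E - {#Pos A#}" using k by (rule mem_diff_single)
      then have "lit_less lt k (Pos A)" using E(2) by (auto simp: gstrictly_maximal_def)
      then show ?thesis using L less lit_less_trans by blast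
    qed
  qed
  then have "cl_less lt E D" unfolding cl_less_def using L by (intro ms_less0) auto
  then show ?thesis using A E(1) unfolding interp_at_def by blast
qed

lemma IN_atoms: "A \<in> IN \<Longrightarrow> ground_atom A \<and> wf_atom ar A \<and> (\<exists>S t. A = Pred S t)"
proof -
  assume "A \<in> IN"
  then obtain D where D: "A \<in> production ar lt N D" using in_IN by blast
  then have D': "D \<in> G" "A \<in># snd D" using prod_snd by (auto simp: prod_char)
  then have "ground_atom A \<and> wf_atom ar A" using G_atoms by auto
  moreover obtain C \<pi> \<delta> where C: "(C, \<pi>) \<in> N" "D = subst_cl \<delta> C" using G_elim D'(1) by blast
  then obtain A0 where "A0 \<in># snd C" "A = subst_atom \<delta> A0" using D'(2) by (auto simp: subst_cl_def)
  moreover have "\<forall>A\<in>set_mset (snd C). \<forall>s t. A \<noteq> Eq s t"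
    using msl C(1) by (auto simp: msl_sdc_def Let_def)
  ultimately show ?thesis by (cases A0) auto
qed

lemma contra:
  assumes DR: "DR \<in> ground_inst ar {R}" and less: "cl_less lt DR D" and f: "\<not> true_cl IN DR"
    and s: "redundant ar lt R N \<or> ground_inst ar {R} \<subseteq> G"
    and IH: "\<forall>D'\<in>G. cl_less lt D' D \<longrightarrow> true_cl IN D'"
  shows False
  using s
proof
  assume "ground_inst ar {R} \<subseteq> G"
  then show False using DR less f IH by blast
next
  assume "redundant ar lt R N"
  then obtain M where M: "finite M" "M \<subseteq> {D' \<in> G. cl_less lt D' DR}" "entails M DR"
    using DR by (auto simp: redundant_def)
  have "\<forall>D'\<in>M. true_cl IN D'" using M(2) IH less cl_less_trans by blast
  then show False using M(3) f by (auto simp: entails_def)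
qed

end


lemma lits_remove_pos: "A \<in># snd C \<Longrightarrow> lits C - {#Pos A#} = lits (fst C, snd C - {#A#})"
  by (cases C) (auto simp: lits_def image_mset_Diff)

lemma lits_remove_neg: "A \<in># fst C \<Longrightarrow> lits C = lits (fst C - {#A#}, snd C) + {#Neg A#}"
proof -
  assume "A \<in># fst C"
  then have "fst C = (fst C - {#A#}) + {#A#}" by simp
  then have "image_mset Neg (fst C) = image_mset Neg (fst C - {#A#}) + {#Neg A#}"
    by (metis image_mset_add_mset image_mset_single image_mset_union)
  then show ?thesis by (simp add: lits_def)
qed

lemma fst_subst_cl[simp]: "fst (subst_cl \<delta> C) = image_mset (subst_atom \<delta>) (fst C)"
  by (simp add: subst_cl_def)

lemma snd_subst_cl[simp]: "snd (subst_cl \<delta> C) = image_mset (subst_atom \<delta>) (snd C)"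
  by (simp add: subst_cl_def)

lemma subst_cl_pair: "subst_cl \<delta> (a, b) = (image_mset (subst_atom \<delta>) a, image_mset (subst_atom \<delta>) b)"
  by (simp add: subst_cl_def)

context cmpl
begin

lemma false_D: "\<not> true_cl I D \<Longrightarrow> set_mset (fst D) \<subseteq> I \<and> set_mset (snd D) \<inter> I = {}"
  by (auto simp: true_cl_def)

lemma case_sel:
  assumes IH: "\<forall>D'\<in>G. cl_less lt D' D \<longrightarrow> true_cl IN D'"
    and fD: "\<not> true_cl IN D"
    and C: "(C, \<pi>) \<in> N" "solution ar \<delta> \<pi>" "D = subst_cl \<delta> C"
    and B: "B \<in># sel C"
  shows False
proof -
  have Bf: "B \<in># fst C" using sel_sub[OF B] by blast
  let ?Bd = "subst_atom \<delta> B"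
  have BdD: "?Bd \<in># fst D" using Bf C(3) by simp
  have fD': "set_mset (fst D) \<subseteq> IN" "set_mset (snd D) \<inter> IN = {}" using false_D[OF fD] by auto
  then have "?Bd \<in> IN" using BdD by auto
  then obtain E where E: "?Bd \<in> production ar lt N E" using in_IN by blast
  have E1: "E \<in> G" "sel_empty_inst ar N E" "gstrictly_maximal lt (Pos ?Bd) E"
    "\<not> true_cl (interp_at ar lt N E) E" using E by (auto simp: prod_char)
  obtain C1 \<pi>1 \<delta>1 where C1: "(C1, \<pi>1) \<in> N" "solution ar \<delta>1 \<pi>1" "E = subst_cl \<delta>1 C1" "sel C1 = {#}"
    using E1(2) by (auto simp: sel_empty_inst_def)
  have "?Bd \<in># snd E" using prod_snd[OF E] .
  then obtain A0 where A0: "A0 \<in># snd C1" "subst_atom \<delta>1 A0 = ?Bd" using C1(3) by auto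
  define V where "V = vars_ccl (C, \<pi>)"
  have fV: "finite V" unfolding V_def by (rule finite_vars_ccl)
  obtain M where M: "\<forall>v\<in>V. v < M"
    using fV by (intro that[of "Suc (Max (insert 0 V))"]) (simp add: le_imp_less_Suc)
  define \<rho> where "\<rho> v = v + M" for v
  have inj: "inj \<rho>" by (auto simp: \<rho>_def inj_def)
  define P1 where "P1 = subst_ccl (Var \<circ> \<rho>) (C1, \<pi>1)"
  define P2 where "P2 = ((C, \<pi>) :: ('f, 'p) cclause)"
  define ds where "ds v = (if v < M then \<delta> v else \<delta>1 (v - M))" for v
  have gd: "grounding ar \<delta>" "grounding ar \<delta>1" using C(2) C1(2) by (auto simp: solution_def)
  have gds: "grounding ar ds" using gd by (auto simp: grounding_def ds_def)
  have r1: "(\<lambda>x. subst ds ((Var \<circ> \<rho>) x)) = \<delta>1" by (rule ext) (simp add: ds_def \<rho>_def)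
  have r1': "(\<lambda>x. ds (\<rho> x)) = \<delta>1" by (rule ext) (simp add: ds_def \<rho>_def)
  have r2: "ds x = \<delta> x" if "x \<in> V" for x using M that by (simp add: ds_def)
  have VC: "vars_cl C \<subseteq> V" "lhs_vars \<pi> \<subseteq> V" by (auto simp: V_def vars_ccl_def)
  have dsC: "subst_cl ds C = D"
    using C(3) VC r2 by (auto intro: subst_cl_agree)
  have dsP1: "subst_cl ds (fst P1) = E"
    by (simp add: P1_def subst_ccl_def subst_cl_comp r1 r1' C1(3))
  have solP1: "solution ar ds (snd P1)"
    using sol_comp[OF gds, of "Var \<circ> \<rho>" \<pi>1] r1 C1(2) by (simp add: P1_def subst_ccl_def)
  have solP2: "solution ar ds \<pi>"
    using sol_agree[OF gds _ C(2)] VC r2 by blast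
  let ?rn = "subst_atom (Var \<circ> \<rho>)"
  define A where "A = ?rn A0"
  define G1 where "G1 = image_mset ?rn (fst C1)"
  define D1 where "D1 = image_mset ?rn (snd C1 - {#A0#})"
  have fP1: "fst P1 = (G1, D1 + {#A#})"
  proof -
    have "snd C1 = (snd C1 - {#A0#}) + {#A0#}" using A0(1) by simp
    then have "image_mset ?rn (snd C1) = D1 + {#A#}"
      unfolding D1_def A_def by (metis image_mset_add_mset image_mset_single image_mset_union)
    then show ?thesis by (simp add: P1_def subst_ccl_def subst_cl_def G1_def)
  qed
  define G2 where "G2 = fst C - {#B#}"
  have fP2: "fst P2 = (G2 + {#B#}, snd C)" using Bf by (simp add: P2_def G2_def)
  have vB: "vars_atom B \<subseteq> V" using Bf by (auto simp: V_def vars_ccl_def vars_cl_def)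
  have dsB: "subst_atom ds B = ?Bd" using vB r2 by (auto intro: subst_atom_agree)
  have dsA: "subst_atom ds A = ?Bd"
    using A0(2) by (simp add: A_def subst_atom_comp r1 r1')
  have noeq1: "\<forall>X\<in>set_mset (snd C1). \<forall>s t. X \<noteq> Eq s t"
    using msl C1(1) by (auto simp: msl_sdc_def Let_def)
  obtain S0 t0 where A0P: "A0 = Pred S0 t0" using noeq1 A0(1) by (cases A0) auto
  obtain S t where BP: "B = Pred S t" using sel_sub[OF B] by blast
  have AP: "A = Pred S0 (subst (Var \<circ> \<rho>) t0)" by (simp add: A_def A0P)
  obtain \<sigma> where sg: "is_mgu \<sigma> A B"
      "\<forall>\<tau>. subst_atom \<tau> A = subst_atom \<tau> B \<longrightarrow> (\<forall>x. \<tau> x = subst \<tau> (\<sigma> x))"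
    using atom_mgu[of ds S0 "subst (Var \<circ> \<rho>) t0" S t] dsA dsB AP BP by auto
  have fx: "\<forall>x. ds x = subst ds (\<sigma> x)" using sg(2) dsA dsB by auto
  have msl1: "is_sdc \<pi>1" "is_sdc \<pi>" using msl C1(1) C(1) by (auto simp: msl_sdc_def Let_def)
  have str: "\<forall>(t, s)\<in>set_mset (subst_sdc \<sigma> (snd P1 + \<pi>)). straight s"
    using straight_sdc[OF msl1(1)] straight_sdc[OF msl1(2)]
    by (auto simp: subst_sdc_def P1_def subst_ccl_def)
  have solc: "solution ar ds (subst_sdc \<sigma> (snd P1 + \<pi>))"
    using solution_fix[OF fx] solP1 solP2 solution_plus by blast
  obtain \<pi>' where pi': "norm (subst_sdc \<sigma> (snd P1 + \<pi>)) = Some \<pi>'" "solution ar ds \<pi>'" "solvable ar \<pi>'"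
    using norm_sol[OF solc str] by blast
  have "Pos A \<in># lits (fst P1)" using fP1 by (simp add: pos_lits)
  moreover have "gstrictly_maximal lt (subst_lit ds (Pos A)) (subst_cl ds (fst P1))"
    using E1(3) dsP1 dsA by simp
  ultimately have smax: "strictly_maximal ar lt (Pos (subst_atom \<sigma> A)) (subst_ccl \<sigma> P1)"
    using sm_lift[OF _ fx solP1] by (metis prod.collapse subst_lit.simps(1))
  have selP1: "sel (fst P1) = {#}"
    using sel_rename[OF inj, of C1] C1(4) by (simp add: P1_def subst_ccl_def)
  have selP2: "B \<in># sel (fst P2)" using B by (simp add: P2_def)
  have disj: "vars_ccl P1 \<inter> vars_ccl P2 = {}"
  proof -
    have "vars_ccl P1 \<subseteq> {v. M \<le> v}" by (auto simp: P1_def vars_ccl_rename \<rho>_def)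
    moreover have "vars_ccl P2 \<subseteq> {v. v < M}" using M by (auto simp: P2_def V_def)
    ultimately have "M \<le> x \<and> x < M" if "x \<in> vars_ccl P1" "x \<in> vars_ccl P2" for x
      using that by blast
    then show ?thesis by fastforce
  qed
  define R where "R = (subst_cl \<sigma> (G1 + G2, D1 + snd C), \<pi>')"
  have res: "sdc_resolution ar lt P1 P2 R"
    unfolding sdc_resolution_def
    apply (rule exI[of _ G1], rule exI[of _ D1], rule exI[of _ A], rule exI[of _ "snd P1"])
    apply (rule exI[of _ G2], rule exI[of _ B], rule exI[of _ "snd C"], rule exI[of _ \<pi>])
    apply (rule exI[of _ \<sigma>], rule exI[of _ \<pi>'])
    using fP1 fP2 disj sg(1) pi' smax selP1 selP2 by (auto simp: R_def P2_def prod_eq_iff)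
  have v1: "variant_in N P1" unfolding variant_in_def P1_def using C1(1) inj by blast
  have v2: "variant_in N P2" unfolding variant_in_def P2_def using C(1)
    by (intro exI[of _ id] exI[of _ "(C, \<pi>)"]) (simp add: subst_ccl_def comp_def)
  have s: "redundant ar lt R N \<or> ground_inst ar {R} \<subseteq> G"
    using sat v1 v2 res unfolding saturated_def by blast
  define DR where "DR = subst_cl ds (fst R)"
  have DRin: "DR \<in> ground_inst ar {R}"
    unfolding ground_inst_def DR_def using pi'(2) by (cases R) (auto simp: R_def)
  have dsfix: "subst_cl ds (subst_cl \<sigma> X) = subst_cl ds X" for X
    by (simp add: subst_cl_comp fix_eq[OF fx])
  have iG1: "image_mset (subst_atom ds) G1 = fst E"
    using dsP1 fP1 by (metis fst_conv fst_subst_cl)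
  have iD1: "image_mset (subst_atom ds) D1 = snd E - {#?Bd#}"
  proof -
    have "image_mset (subst_atom ds) (D1 + {#A#}) = snd E" using dsP1 fP1 by (metis snd_conv snd_subst_cl)
    then show ?thesis using dsA by (metis add_mset_remove_trivial image_mset_add_mset add_mset_add_single)
  qed
  have iG2: "image_mset (subst_atom ds) G2 = fst D - {#?Bd#}"
  proof -
    have "image_mset (subst_atom ds) (G2 + {#B#}) = fst D"
      using dsC Bf by (metis G2_def fst_subst_cl insert_DiffM2)
    then show ?thesis using dsB by (metis add_mset_remove_trivial image_mset_add_mset add_mset_add_single)
  qed
  have iD2: "image_mset (subst_atom ds) (snd C) = snd D" using dsC by (metis snd_subst_cl)
  have DR_eq: "DR = (fst E + (fst D - {#?Bd#}), (snd E - {#?Bd#}) + snd D)"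
  proof -
    have "DR = subst_cl ds (G1 + G2, D1 + snd C)" by (simp only: DR_def R_def fst_conv dsfix)
    then show ?thesis by (simp only: subst_cl_pair image_mset_union iG1 iD1 iG2 iD2)
  qed
  have BdE: "?Bd \<in># snd E" using prod_snd[OF E] .
  have less: "cl_less lt DR D"
  proof -
    have l1: "lits DR = lits (fst D - {#?Bd#}, snd D) + lits (fst E, snd E - {#?Bd#})"
      by (simp add: DR_eq lits_def)
    have l2: "lits D = lits (fst D - {#?Bd#}, snd D) + {#Neg ?Bd#}"
      using lits_remove_neg[OF BdD] .
    have "\<forall>k\<in>#lits (fst E, snd E - {#?Bd#}). \<exists>j\<in>#{#Neg ?Bd#}. (k, j) \<in> {(L, L'). lit_less lt L L'}"
    proof
      fix k assume "k \<in># lits (fst E, snd E - {#?Bd#})"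
      then have "k \<in># lits E - {#Pos ?Bd#}" using lits_remove_pos[OF BdE] by simp
      then have "lit_less lt k (Pos ?Bd)" using E1(3) by (auto simp: gstrictly_maximal_def)
      then show "\<exists>j\<in>#{#Neg ?Bd#}. (k, j) \<in> {(L, L'). lit_less lt L L'}"
        using lit_less_trans[OF _ pos_neg_same] by auto
    qed
    then show ?thesis unfolding cl_less_def l1 l2 by (intro ms_less) auto
  qed
  have fE: "set_mset (fst E) \<subseteq> interp_at ar lt N E" "set_mset (snd E) \<inter> interp_at ar lt N E = {}"
    using false_D[OF E1(4)] by auto
  have "\<not> true_cl IN DR"
  proof -
    have "set_mset (fst DR) \<subseteq> IN"
      using fE(1) interp_sub[of E] fD'(1) by (auto simp: DR_eq dest: in_diffD)
    moreover have "set_mset (snd DR) \<inter> IN = {}"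
    proof -
      have "X \<notin> IN" if X: "X \<in># snd E - {#?Bd#}" for X
      proof
        assume "X \<in> IN"
        then obtain F where F: "X \<in> production ar lt N F" using in_IN by blast
        have "Pos X \<in># lits E - {#Pos ?Bd#}" using X lits_remove_pos[OF BdE] by (simp add: pos_lits)
        then have "lit_less lt (Pos X) (Pos ?Bd)" using E1(3) by (auto simp: gstrictly_maximal_def)
        moreover have "Pos ?Bd \<in># lits E" using BdE by (simp add: pos_lits)
        ultimately have "X \<in> interp_at ar lt N E" using in_interp[OF F] by blast
        moreover have "X \<in># snd E" using X by (meson in_diffD)
        ultimately show False using fE(2) by blast
      qed
      then show ?thesis using fD'(2) by (auto simp: DR_eq)
    qed
    ultimately show ?thesis by (auto simp: true_cl_def)
  qed
  then show False using contra[OF DRin less _ s IH] by blast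
qed

end


context cmpl
begin

lemma neg_lemma:
  assumes D: "D \<in> G" and C: "(C, \<pi>) \<in> N" "solution ar \<delta> \<pi>" "D = subst_cl \<delta> C"
    and se: "sel C = {#}" and noeq: "\<forall>A\<in>set_mset (fst C). \<forall>s t. A \<noteq> Eq s t"
    and X: "X \<in># fst D"
  shows "\<exists>Y\<in>#snd D. lt X Y"
proof -
  obtain A where A: "A \<in># fst C" "X = subst_atom \<delta> A" using X C(3) by auto
  obtain S t where At: "A = Pred S t" using noeq A(1) by (cases A) auto
  obtain x where x: "t = Var x" "x \<in> (\<Union>A\<in>set_mset (snd C). vars_atom A)"
      "\<not> (\<exists>P. Pred P t \<in># snd C)"
    using sel_empty_props[OF se noeq] A(1) At by blast
  obtain Y where Y: "Y \<in># snd C" "x \<in> vars_atom Y" using x(2) by blast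
  have noeqD: "\<forall>X\<in>set_mset (snd C). \<forall>s t. X \<noteq> Eq s t"
    using msl C(1) by (auto simp: msl_sdc_def Let_def)
  obtain P t' where Yt: "Y = Pred P t'" using noeqD Y(1) by (cases Y) auto
  have "t' \<noteq> Var x" using x(1,3) Y(1) Yt by auto
  then have ps: "Var x \<in> psubterms t'" using var_psubterm Y(2) Yt by auto
  then have ps2: "\<delta> x \<in> psubterms (subst \<delta> t')" using psubterm_subst by fastforce
  let ?X = "Pred S (\<delta> x)" and ?Y = "Pred P (subst \<delta> t')"
  have XX: "X = ?X" using A(2) At x(1) by simp
  have YD: "?Y \<in># snd D" using Y(1) Yt C(3) by force
  have "?X \<in># fst D + snd D" using X XX by simp
  then have gX: "ground_atom ?X \<and> wf_atom ar ?X" using G_atoms[OF D] by blast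
  have "?Y \<in># fst D + snd D" using YD by simp
  then have gY: "ground_atom ?Y \<and> wf_atom ar ?Y" using G_atoms[OF D] by blast
  have nl: "\<not> lit_less lt (Pos ?Y) (Neg ?X)"
    using ord gX gY ps2 unfolding atom_ordering_def by blast
  have "?X \<noteq> ?Y" using psubterm_size[OF ps2] by auto
  then have "lt ?X ?Y \<or> lt ?Y ?X" using total gX gY by blast
  then have "lt ?X ?Y" using nl pos_neg by blast
  then show ?thesis using YD XX by blast
qed

lemma case_nosel:
  assumes IH: "\<forall>D'\<in>G. cl_less lt D' D \<longrightarrow> true_cl IN D'"
    and fD: "\<not> true_cl IN D" and ne: "empty_cl \<notin> G" and D: "D \<in> G"
    and C: "(C, \<pi>) \<in> N" "solution ar \<delta> \<pi>" "D = subst_cl \<delta> C"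
    and se: "sel C = {#}"
  shows False
proof -
  have fD': "set_mset (fst D) \<subseteq> IN" "set_mset (snd D) \<inter> IN = {}" using false_D[OF fD] by auto
  have mC: "msl_sdc (C, \<pi>)" using msl C(1) by auto
  have noeqD: "\<forall>X\<in>set_mset (snd C). \<forall>s t. X \<noteq> Eq s t"
    using mC by (auto simp: msl_sdc_def Let_def)
  consider (noeq) "\<forall>A\<in>set_mset (fst C). \<forall>s t. A \<noteq> Eq s t"
    | (eq) s t where "fst C = {#Eq s t#}"
    using mC by (auto simp: msl_sdc_def Let_def)
  then show False
  proof cases
    case eq
    then have "subst_atom \<delta> (Eq s t) \<in> IN" using fD'(1) C(3) by auto
    then show False using IN_atoms by auto
  next
    case noeq
    note NEG = neg_lemma[OF D C se noeq]
    have sne: "snd D \<noteq> {#}"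
    proof
      assume e: "snd D = {#}"
      have "fst D = {#}"
      proof (rule ccontr)
        assume "fst D \<noteq> {#}"
        then obtain X where "X \<in># fst D" by blast
        then show False using NEG e by auto
      qed
      then have "D = empty_cl" using e by (simp add: empty_cl_def prod_eq_iff)
      then show False using ne D by simp
    qed
    obtain A where A: "A \<in># snd D" "\<forall>B\<in>set_mset (snd D). \<not> lt A B"
      using finite_max[of "set_mset (snd D)" lt] sne trl irr by auto
    have gA: "ground_atom A \<and> wf_atom ar A" using G_atoms[OF D] A(1) by auto
    have Amax: "B = A \<or> lt B A" if "B \<in># snd D" for B
      using total[of A B] gA G_atoms[OF D, of B] that A(2) by auto
    have allle: "lit_le lt L (Pos A)" if L: "L \<in># lits D" for L
    proof (cases L)
      case (Pos B)
      then have "B \<in># snd D" using L by (simp add: pos_lits)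
      then show ?thesis using Amax Pos pos_pos by (auto simp: lit_le_def)
    next
      case (Neg X)
      then have "X \<in># fst D" using L by (simp add: neg_lits)
      then obtain Y where Y: "Y \<in># snd D" "lt X Y" using NEG by blast
      have "lit_less lt (Neg X) (Pos Y)" using neg_pos[of lt, OF Y(2)] .
      moreover have "Y = A \<or> lit_less lt (Pos Y) (Pos A)" using Amax[OF Y(1)] pos_pos by blast
      ultimately show ?thesis using Neg lit_less_trans by (auto simp: lit_le_def)
    qed
    show False
    proof (cases "count (snd D) A \<ge> 2")
      case True
      obtain A1 where A1: "A1 \<in># snd C" "subst_atom \<delta> A1 = A" using A(1) C(3) by auto
      have "A \<in># snd D - {#A#}" using True by (simp add: in_diff_count)
      moreover have "snd D - {#A#} = image_mset (subst_atom \<delta>) (snd C - {#A1#})"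
        using A1 C(3) by (simp add: image_mset_Diff)
      ultimately obtain A2 where A2: "A2 \<in># snd C - {#A1#}" "subst_atom \<delta> A2 = A" by auto
      define D0 where "D0 = snd C - {#A1#} - {#A2#}"
      have sC: "snd C = D0 + {#A1, A2#}"
      proof -
        have h1: "snd C - {#A1#} = add_mset A2 D0" unfolding D0_def using A2(1) by (rule insert_DiffM[symmetric])
        have "snd C = add_mset A1 (snd C - {#A1#})" using A1(1) by simp
        then show ?thesis by (simp add: h1)
      qed
      obtain S1 t1 where A1P: "A1 = Pred S1 t1" using noeqD A1(1) by (cases A1) auto
      obtain S2 t2 where A2P: "A2 = Pred S2 t2" using noeqD A2(1) by (cases A2) (auto dest: in_diffD)
      obtain \<sigma> where sg: "is_mgu \<sigma> A1 A2"
          "\<forall>\<tau>. subst_atom \<tau> A1 = subst_atom \<tau> A2 \<longrightarrow> (\<forall>x. \<tau> x = subst \<tau> (\<sigma> x))"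
        using atom_mgu[of \<delta> S1 t1 S2 t2] A1 A2 A1P A2P by auto
      have fx: "\<forall>x. \<delta> x = subst \<delta> (\<sigma> x)" using sg(2) A1 A2 by auto
      have gd: "grounding ar \<delta>" using C(2) by (simp add: solution_def)
      have str: "\<forall>(t, s)\<in>set_mset (subst_sdc \<sigma> \<pi>). straight s"
      proof -
        have "is_sdc \<pi>" using mC by (simp add: msl_sdc_def Let_def)
        then show ?thesis by (intro straight_subst_sdc straight_sdc)
      qed
      obtain \<pi>' where pi': "norm (subst_sdc \<sigma> \<pi>) = Some \<pi>'" "solution ar \<delta> \<pi>'" "solvable ar \<pi>'"
        using norm_sol[OF solution_fix[OF fx C(2)] str] by blast
      have mx: "maximal ar lt (Pos (subst_atom \<sigma> A1)) (subst_ccl \<sigma> (C, \<pi>))"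
      proof -
        have "Pos A1 \<in># lits C" using A1(1) by (simp add: pos_lits)
        moreover have "\<forall>B\<in>set_mset (lits (subst_cl \<delta> C) - {#subst_lit \<delta> (Pos A1)#}).
            lit_le lt B (subst_lit \<delta> (Pos A1))"
        proof -
          have "\<forall>B\<in>set_mset (lits D - {#Pos A#}). lit_le lt B (Pos A)"
            using allle by (blast dest: in_diffD)
          then show ?thesis using A1(2) C(3) by simp
        qed
        ultimately show ?thesis using m_lift[OF _ fx C(2)] by fastforce
      qed
      define R where "R = (subst_cl \<sigma> (fst C, D0 + {#A1#}), \<pi>')"
      have PC: "(C, \<pi>) = ((fst C, D0 + {#A1, A2#}), \<pi>)" using sC by (simp add: prod_eq_iff)
      have fac: "sdc_factoring ar lt (C, \<pi>) R"
        unfolding sdc_factoring_def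
        apply (rule exI[of _ "fst C"], rule exI[of _ D0], rule exI[of _ A1], rule exI[of _ A2])
        apply (rule exI[of _ \<pi>], rule exI[of _ \<sigma>], rule exI[of _ \<pi>'])
        apply (intro conjI)
        using PC sg(1) se mx pi' by (simp_all add: R_def)
      have v: "variant_in N (C, \<pi>)" unfolding variant_in_def using C(1)
        by (intro exI[of _ id] exI[of _ "(C, \<pi>)"]) (simp add: subst_ccl_def comp_def)
      have s: "redundant ar lt R N \<or> ground_inst ar {R} \<subseteq> G"
        using sat v fac unfolding saturated_def by blast
      define DR where "DR = subst_cl \<delta> (fst R)"
      have DRin: "DR \<in> ground_inst ar {R}"
        unfolding ground_inst_def DR_def using pi'(2) by (cases R) (auto simp: R_def)
      have dfix: "subst_cl \<delta> (subst_cl \<sigma> X) = subst_cl \<delta> X" for X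
        by (simp add: subst_cl_comp fix_eq[OF fx])
      have iD: "image_mset (subst_atom \<delta>) (D0 + {#A1#}) = snd D - {#A#}"
      proof -
        have "snd D = image_mset (subst_atom \<delta>) (D0 + {#A1#}) + {#A#}"
          using C(3) sC A2(2) by simp
        then show ?thesis by simp
      qed
      have DR_eq: "DR = (fst D, snd D - {#A#})"
      proof -
        have "DR = subst_cl \<delta> (fst C, D0 + {#A1#})" by (simp only: DR_def R_def fst_conv dfix)
        then show ?thesis using C(3) by (simp only: subst_cl_pair iD) simp
      qed
      have less: "cl_less lt DR D"
      proof -
        have "lits DR = lits D - {#Pos A#}" using lits_remove_pos[OF A(1)] DR_eq by simp
        moreover have "Pos A \<in># lits D" using A(1) by (simp add: pos_lits)
        ultimately have "lits D = lits DR + {#Pos A#}" by simp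
        then show ?thesis unfolding cl_less_def using ms_less[of "{#Pos A#}" "{#}" _ "lits DR"] by simp
      qed
      have "\<not> true_cl IN DR" using fD' by (auto simp: true_cl_def DR_eq dest: in_diffD)
      then show False using contra[OF DRin less _ s IH] by blast
    next
      case False
      have "count (snd D) A > 0" using A(1) by simp
      then have c1: "count (snd D) A = 1" using False by linarith
      have gsm: "gstrictly_maximal lt (Pos A) D"
        unfolding gstrictly_maximal_def
      proof (intro conjI ballI)
        show "Pos A \<in># lits D" using A(1) by (simp add: pos_lits)
      next
        fix L assume L: "L \<in> set_mset (lits D - {#Pos A#})"
        then have L': "L \<in># lits D" by (meson in_diffD)
        show "lit_less lt L (Pos A)"
        proof (cases "L = Pos A")
          case True
          then have "Pos A \<in># lits D - {#Pos A#}" using L by simp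
          then have "A \<in># snd D - {#A#}" using lits_remove_pos[OF A(1)] by (simp add: pos_lits)
          then show ?thesis using c1 by (simp add: in_diff_count)
        next
          case False then show ?thesis using allle[OF L'] by (simp add: lit_le_def)
        qed
      qed
      have "set_mset (fst D) \<subseteq> interp_at ar lt N D"
      proof
        fix X assume X: "X \<in># fst D"
        then have "X \<in> IN" using fD' by auto
        then obtain F where F: "X \<in> production ar lt N F" using in_IN by blast
        show "X \<in> interp_at ar lt N D"
          using in_interp[OF F _ pos_neg_same] X by (simp add: neg_lits)
      qed
      moreover have "set_mset (snd D) \<inter> interp_at ar lt N D = {}" using fD'(2) interp_sub[of D] by blast
      ultimately have "\<not> true_cl (interp_at ar lt N D) D" by (auto simp: true_cl_def)
      moreover have "sel_empty_inst ar N D" unfolding sel_empty_inst_def using C se by blast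
      ultimately have "A \<in> production ar lt N D" using D gsm by (simp add: prod_char)
      then have "A \<in> IN" using in_IN by blast
      then show False using fD'(2) A(1) by blast
    qed
  qed
qed

lemma model: "empty_cl \<notin> G \<Longrightarrow> D \<in> G \<Longrightarrow> true_cl IN D"
proof (induction D rule: wf_induct[OF wf_cl[OF wf_lt]])
  case (1 D)
  have IH: "\<forall>D'\<in>G. cl_less lt D' D \<longrightarrow> true_cl IN D'" using 1 by blast
  show ?case
  proof (rule ccontr)
    assume fD: "\<not> true_cl IN D"
    obtain C \<pi> \<delta> where C: "(C, \<pi>) \<in> N" "solution ar \<delta> \<pi>" "D = subst_cl \<delta> C"
      using G_elim 1(3) by blast
    show False
    proof (cases "sel C = {#}")
      case True then show False using case_nosel[OF IH fD 1(2) 1(3) C] by blast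
    next
      case False
      then obtain B where "B \<in># sel C" by blast
      then show False using case_sel[OF IH fD C] by blast
    qed
  qed
qed

end

theorem lemma3:
  fixes N :: "('f, 'p) cclause set"
    and ar :: "'f \<Rightarrow> nat"
    and lt :: "('f, 'p) atom \<Rightarrow> ('f, 'p) atom \<Rightarrow> bool"
  assumes "atom_ordering ar lt"
    and "\<forall>Cl\<in>N. msl_sdc Cl \<and> wf_ccl ar Cl"
    and "saturated ar lt N"
  shows "(\<not> satisfiable ar N \<longleftrightarrow> empty_cl \<in> ground_inst ar N) \<and>
         (empty_cl \<notin> ground_inst ar N \<longrightarrow> models ar (partial_model ar lt N) N)"
proof -
  interpret cmpl N ar lt using assms by unfold_locales
  have m: "empty_cl \<notin> ground_inst ar N \<Longrightarrow> models ar (partial_model ar lt N) N"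
    using model by (auto simp: models_def)
  have e: "\<not> satisfiable ar N" if em: "empty_cl \<in> ground_inst ar N"
  proof
    assume "satisfiable ar N"
    then obtain I where "models ar I N" by (auto simp: satisfiable_def)
    then have "true_cl I empty_cl" using em by (auto simp: models_def)
    then show False by (simp add: true_cl_def empty_cl_def)
  qed
  have s: "empty_cl \<notin> ground_inst ar N \<Longrightarrow> satisfiable ar N"
    using m IN_atoms unfolding satisfiable_def by blast
  show ?thesis using m e s by blast
qed

end
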